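(* Let $\Omega\subset\mathbb{R}^2$ be bounded and convex with $\delta:=\operatorname{diam}\Omega$, and let $f\in C^\infty(\overline{\Omega})$. Then for all $0<r\le R$, $$\int_\Omega\int_\Omega\frac{|f(x)-f(y)|^2}{|x-y|^3}\,dx\,dy\ \le\ \pi r\int_\Omega|\nabla f|^2\,dx+8\ln\frac Rr\,\|f\|_{L^\infty}\int_\Omega|\nabla f|\,dx+\frac{4\pi\alpha_0}{R}\|f\|_{L^\infty}\min\Big\{\delta\int_{\Omega}|\nabla f|\,dx,\ 2|\Omega|\,\|f\|_{L^\infty}\Big\},$$ where $\alpha_0=1$ if $R<\delta$ and $\alpha_0=0$ otherwise.
   Context: $\|f\|_{L^\infty}$ is the supremum norm of $f$ on $\Omega$; $|\Omega|$ is the Lebesgue measure of $\Omega$. *)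

theory Defs
  imports "HOL-Analysis.Analysis"
begin

text \<open>D is assigns to every finite sequence of coordinate directions (a multi-index, listed
  as the directions of differentiation) the corresponding partial derivative: on the
  interior of S each D is is (Frechet) differentiable with partials D (i # is), and every
  D is extends continuously to the closure of S, with D [] = f there.\<close>
definition smooth_on_closure :: "(real^2 \<Rightarrow> real) \<Rightarrow> (real^2) set \<Rightarrow> bool" where
  "smooth_on_closure f S \<longleftrightarrow>
     (\<exists>D :: 2 list \<Rightarrow> real^2 \<Rightarrow> real.
        (\<forall>x\<in>closure S. D [] x = f x) \<and>
        (\<forall>is. continuous_on (closure S) (D is)) \<and>
        (\<forall>is. \<forall>x\<in>interior S.
            (D is has_derivative (\<lambda>h. \<Sum>i\<in>UNIV. h $ i * D (i # is) x)) (at x)))"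

definition grad :: "(real^2 \<Rightarrow> real) \<Rightarrow> real^2 \<Rightarrow> real^2" where
  "grad f x = (\<chi> i. frechet_derivative f (at x) (axis i 1))"

definition sup_norm_on :: "(real^2 \<Rightarrow> real) \<Rightarrow> (real^2) set \<Rightarrow> real" where
  "sup_norm_on f S = (SUP x\<in>S. \<bar>f x\<bar>)"

end

theory Submission
  imports Defs "HOL-Analysis.Analysis"
begin

lemma ftc_nn:
  fixes f F :: "real \<Rightarrow> real"
  assumes "a \<le> b" and "\<And>x. a \<le> x \<Longrightarrow> x \<le> b \<Longrightarrow> (F has_real_derivative f x) (at x within {a..b})"
    and "\<And>x. a \<le> x \<Longrightarrow> x \<le> b \<Longrightarrow> 0 \<le> f x"
  shows "(\<integral>\<^sup>+x. ennreal (f x) * indicator {a..b} x \<partial>lborel) = ennreal (F b - F a)"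
proof -
  have "(f has_integral (F b - F a)) {a..b}"
    using assms by (intro fundamental_theorem_of_calculus) (auto simp: has_real_derivative_iff_has_vector_derivative[symmetric])
  then show ?thesis using assms(3) by (intro nn_integral_has_integral_lebesgue') auto
qed

lemma distr_norm_R2:
  "distr (lborel::(real^2) measure) borel norm = density lborel (\<lambda>s. ennreal (2 * pi * s) * indicator {0 <..} s)"
proof (rule measure_eqI_generator_eq_countable[where E="range lessThan" and \<Omega>=UNIV and A="range (\<lambda>n::nat. {..<real n})"])
  show "Int_stable (range lessThan :: real set set)"
    unfolding Int_stable_def by (auto simp: greaterThan_Int_greaterThan)
  show "range lessThan \<subseteq> Pow (UNIV :: real set)" by auto
  show "sets (distr (lborel::(real^2) measure) borel norm) = sigma_sets UNIV (range lessThan)"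
    by (simp add: borel_Iio)
  show "sets (density lborel (\<lambda>s. ennreal (2 * pi * s) * indicator {0 <..} s)) = sigma_sets UNIV (range lessThan)"
    by (simp add: borel_Iio)
  show "range (\<lambda>n::nat. {..<real n}) \<subseteq> range lessThan" by auto
  show "\<Union> (range (\<lambda>n::nat. {..<real n})) = UNIV"
    by (auto intro: reals_Archimedean2)
  show "countable (range (\<lambda>n::nat. {..<real n}))" by auto
  have em: "emeasure (distr (lborel::(real^2) measure) borel norm) {..<a} = (if a \<le> 0 then 0 else ennreal (pi * a^2))" for a :: real
  proof -
    have "emeasure (distr (lborel::(real^2) measure) borel norm) {..<a} = emeasure lborel (ball (0::real^2) a)"
      by (subst emeasure_distr) (auto intro!: arg_cong2[where f=emeasure] simp: dist_norm)
    also have "\<dots> = (if a \<le> 0 then 0 else ennreal (pi * a^2))"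
      using emeasure_ball[of a "0::real^2"] by (auto simp: unit_ball_vol_2 mult.commute ball_empty)
    finally show ?thesis .
  qed
  show "emeasure (distr (lborel::(real^2) measure) borel norm) X \<noteq> \<infinity>" if "X \<in> range (\<lambda>n::nat. {..<real n})" for X
    using that em by (auto split: if_splits)
  show "emeasure (distr (lborel::(real^2) measure) borel norm) X = emeasure (density lborel (\<lambda>s. ennreal (2 * pi * s) * indicator {0 <..} s)) X"
    if "X \<in> range lessThan" for X
  proof -
    from that obtain a where X: "X = {..<a}" by auto
    have "emeasure (density lborel (\<lambda>s. ennreal (2 * pi * s) * indicator {0 <..} s)) {..<a}
       = (\<integral>\<^sup>+s. ennreal (2 * pi * s) * indicator {0 <..< a} s \<partial>lborel)"
      by (subst emeasure_density) (auto intro!: nn_integral_cong split: split_indicator)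
    also have "\<dots> = (if a \<le> 0 then 0 else ennreal (pi * a^2))"
    proof (cases "a \<le> 0")
      case True then show ?thesis by simp
    next
      case False
      have "((\<lambda>s. 2 * pi * s) has_integral (pi * a^2 - pi * 0^2)) {0..a}"
        using False by (intro fundamental_theorem_of_calculus) (auto intro!: derivative_eq_intros simp: has_real_derivative_iff_has_vector_derivative[symmetric])
      then have "((\<lambda>s. 2 * pi * s) has_integral (pi * a^2)) {0 <..< a}"
        by (simp add: has_integral_Icc_iff_Ioo)
      then show ?thesis using False by (subst nn_integral_has_integral_lebesgue') auto
    qed
    finally show ?thesis using X em by simp
  qed
qed

lemma radial_R2:
  fixes \<psi> :: "real \<Rightarrow> ennreal"
  assumes [measurable]: "\<psi> \<in> borel_measurable borel"
  shows "(\<integral>\<^sup>+h. \<psi> (norm h) \<partial>(lborel::(real^2) measure)) = (\<integral>\<^sup>+s. ennreal (2 * pi * s) * indicator {0 <..} s * \<psi> s \<partial>lborel)"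
proof -
  have "(\<integral>\<^sup>+h. \<psi> (norm h) \<partial>(lborel::(real^2) measure)) = (\<integral>\<^sup>+s. \<psi> s \<partial>distr (lborel::(real^2) measure) borel norm)"
    by (subst nn_integral_distr) auto
  also have "\<dots> = (\<integral>\<^sup>+s. ennreal (2 * pi * s) * indicator {0 <..} s * \<psi> s \<partial>lborel)"
    unfolding distr_norm_R2 by (subst nn_integral_density) auto
  finally show ?thesis .
qed

definition rot :: "real \<Rightarrow> real^2 \<Rightarrow> real^2" where
  "rot t h = vector [h$1 * cos t - h$2 * sin t, h$1 * sin t + h$2 * cos t]"

lemma rot_nth [simp]: "rot t h $ 1 = h$1 * cos t - h$2 * sin t" "rot t h $ 2 = h$1 * sin t + h$2 * cos t"
  by (simp_all add: rot_def)

lemma inner_R2: "(x::real^2) \<bullet> y = x$1 * y$1 + x$2 * y$2"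
  by (simp add: inner_vec_def sum_2)

lemma linear_rot: "linear (rot t)"
  by (rule linearI) (auto simp: vec_eq_iff forall_2 algebra_simps)

lemma inner_rot: "rot t x \<bullet> rot t y = x \<bullet> y"
proof -
  have s: "sin t * sin t = 1 - cos t * cos t" using sin_cos_squared_add[of t] by (simp add: power2_eq_square)
  show ?thesis unfolding inner_R2 rot_nth using s by algebra
qed

lemma norm_rot [simp]: "norm (rot t x) = norm x"
  by (simp add: norm_eq_sqrt_inner inner_rot)

lemma orth_rot: "orthogonal_transformation (rot t)"
  by (simp add: orthogonal_transformation_def linear_rot inner_rot)

lemma rot_rot_neg: "rot t (rot (-t) h) = h"
proof -
  have s: "sin t * sin t = 1 - cos t * cos t" using sin_cos_squared_add[of t] by (simp add: power2_eq_square)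
  show ?thesis unfolding vec_eq_iff forall_2 by (simp add: algebra_simps) (use s in algebra)
qed

lemma cont_rot: "continuous_on UNIV (rot t)"
  using linear_rot by (simp add: linear_continuous_on linear_linear)

lemma meas_rot [measurable]: "rot t \<in> borel_measurable borel"
  by (intro borel_measurable_continuous_onI cont_rot)

lemma distr_rot: "distr lborel borel (rot t) = lborel"
proof (rule lborel_eqI[symmetric])
  fix l u :: "real^2"
  assume lu: "\<And>b. b \<in> Basis \<Longrightarrow> l \<bullet> b \<le> u \<bullet> b"
  define S where "S = rot t -` box l u"
  have S_eq: "S = rot (-t) ` box l u"
    unfolding S_def
  proof safe
    fix x assume "rot t x \<in> box l u"
    moreover have "x = rot (-t) (rot t x)" using rot_rot_neg[of "-t" x] by simp
    ultimately show "x \<in> rot (- t) ` box l u" by blast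
  next
    fix y assume "y \<in> box l u"
    then show "rot (-t) y \<in> rot t -` box l u" by (simp add: rot_rot_neg)
  qed
  have "open S" unfolding S_def using cont_rot[of t]
    by (metis open_box open_vimage)
  have "bounded S" unfolding S_eq
    by (intro bounded_linear_image bounded_box) (simp add: linear_rot linear_linear)
  have bS: "S \<in> sets borel" using \<open>open S\<close> by auto
  have "emeasure (distr lborel borel (rot t)) (box l u) = emeasure lborel S"
    unfolding S_def by (subst emeasure_distr) auto
  also have "\<dots> = ennreal (measure lborel S)"
    using emeasure_bounded_finite[OF \<open>bounded S\<close>] by (simp add: emeasure_eq_ennreal_measure)
  also have "measure lborel S = measure lebesgue S" using bS by simp
  also have "\<dots> = measure lebesgue (box l u)"
    unfolding S_eq by (rule measure_orthogonal_image[OF orth_rot]) (simp add: lmeasurable_open)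
  also have "\<dots> = measure lborel (box l u)" by simp
  also have "ennreal \<dots> = emeasure lborel (box l u)"
    using emeasure_bounded_finite[of "box l u"] emeasure_eq_ennreal_measure[of lborel "box l u"] by simp
  also have "\<dots> = (\<Prod>b\<in>Basis. (u - l) \<bullet> b)"
    using lu by (simp add: emeasure_lborel_box_eq)
  finally show "emeasure (distr lborel borel (rot t)) (box l u) = (\<Prod>b\<in>Basis. (u - l) \<bullet> b)" .
qed simp

lemma nn_integral_rot:
  fixes \<phi> :: "real^2 \<Rightarrow> ennreal"
  assumes [measurable]: "\<phi> \<in> borel_measurable borel"
  shows "(\<integral>\<^sup>+h. \<phi> (rot t h) \<partial>lborel) = (\<integral>\<^sup>+h. \<phi> h \<partial>lborel)"
proof -
  have "(\<integral>\<^sup>+h. \<phi> h \<partial>lborel) = (\<integral>\<^sup>+h. \<phi> h \<partial>distr lborel borel (rot t))"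
    by (simp add: distr_rot)
  also have "\<dots> = (\<integral>\<^sup>+h. \<phi> (rot t h) \<partial>lborel)"
    by (subst nn_integral_distr) auto
  finally show ?thesis ..
qed

lemma inner_rot_expand: fixes v h :: "real^2" shows "v \<bullet> rot t h = (v \<bullet> h) * cos t + (v$2 * h$1 - v$1 * h$2) * sin t"
  unfolding inner_R2 rot_nth by (simp add: algebra_simps)

lemma lagrange_R2: fixes v h :: "real^2" shows "(v \<bullet> h)^2 + (v$2 * h$1 - v$1 * h$2)^2 = (norm v)^2 * (norm h)^2"
  unfolding power2_norm_eq_inner inner_R2 by (simp add: power2_eq_square algebra_simps)

lemma ftc_nn_C:
  fixes f F :: "real \<Rightarrow> real"
  assumes "a \<le> b" and "\<And>x. a \<le> x \<Longrightarrow> x \<le> b \<Longrightarrow> (F has_real_derivative f x) (at x within {a..b})"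
    and "\<And>x. a \<le> x \<Longrightarrow> x \<le> b \<Longrightarrow> 0 \<le> f x"
  shows "(\<integral>\<^sup>+x. ennreal (f x) * indicator {a..b} x \<partial>lborel) = ennreal (F b - F a)"
proof -
  have "(f has_integral (F b - F a)) {a..b}"
    using assms by (intro fundamental_theorem_of_calculus) (auto simp: has_real_derivative_iff_has_vector_derivative[symmetric])
  then show ?thesis using assms(3) by (intro nn_integral_has_integral_lebesgue') auto
qed


lemma abscos_0_2pi: "((\<lambda>t. \<bar>cos t\<bar>) has_integral 4) {0..2*pi}"
proof -
  have i1: "((\<lambda>t. \<bar>cos t\<bar>) has_integral (sin (pi/2) - sin 0)) {0..pi/2}"
  proof (rule has_integral_eq[rotated])
    show "((\<lambda>t. cos t) has_integral (sin (pi/2) - sin 0)) {0..pi/2}"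
      by (intro fundamental_theorem_of_calculus) (auto intro!: derivative_eq_intros simp: has_real_derivative_iff_has_vector_derivative[symmetric])
    show "cos x = \<bar>cos x\<bar>" if "x \<in> {0..pi/2}" for x
      using that cos_ge_zero[of x] by auto
  qed
  have i2: "((\<lambda>t. \<bar>cos t\<bar>) has_integral ((- sin (3/2*pi)) - (- sin (pi/2)))) {pi/2..3/2*pi}"
  proof (rule has_integral_eq[rotated])
    show "((\<lambda>t. - cos t) has_integral ((- sin (3/2*pi)) - (- sin (pi/2)))) {pi/2..3/2*pi}"
      by (intro fundamental_theorem_of_calculus) (auto intro!: derivative_eq_intros simp: has_real_derivative_iff_has_vector_derivative[symmetric])
    show "- cos x = \<bar>cos x\<bar>" if "x \<in> {pi/2..3/2*pi}" for x
    proof -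
      have "cos x = - cos (x - pi)" by (simp add: cos_diff)
      moreover have "0 \<le> cos (x - pi)" using that by (intro cos_ge_zero) auto
      ultimately show ?thesis by auto
    qed
  qed
  have i3: "((\<lambda>t. \<bar>cos t\<bar>) has_integral (sin (2*pi) - sin (3/2*pi))) {3/2*pi..2*pi}"
  proof (rule has_integral_eq[rotated])
    show "((\<lambda>t. cos t) has_integral (sin (2*pi) - sin (3/2*pi))) {3/2*pi..2*pi}"
      by (intro fundamental_theorem_of_calculus) (auto intro!: derivative_eq_intros simp: has_real_derivative_iff_has_vector_derivative[symmetric])
    show "cos x = \<bar>cos x\<bar>" if "x \<in> {3/2*pi..2*pi}" for x
    proof -
      have "cos x = cos (x - 2*pi)" by (simp add: cos_diff)
      moreover have "0 \<le> cos (x - 2*pi)" using that by (intro cos_ge_zero) auto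
      ultimately show ?thesis by auto
    qed
  qed
  have s32: "sin (3/2*pi) = -1" by (rule sin_3over2_pi)
  have "((\<lambda>t. \<bar>cos t\<bar>) has_integral ((sin (pi/2) - sin 0) + ((- sin (3/2*pi)) - (- sin (pi/2))))) {0..3/2*pi}"
    using has_integral_combine[OF _ _ i1 i2] by simp
  from has_integral_combine[OF _ _ this i3] have "((\<lambda>t. \<bar>cos t\<bar>) has_integral ((sin (pi/2) - sin 0) + ((- sin (3/2*pi)) - (- sin (pi/2)))
     + (sin (2*pi) - sin (3/2*pi)))) {0..2*pi}" by simp
  then show ?thesis unfolding s32 by simp
qed

lemma abscos_shift:
  assumes "0 \<le> b" "b \<le> 2*pi"
  shows "((\<lambda>t. \<bar>cos (t - b)\<bar>) has_integral 4) {0..2*pi}"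
proof -
  have int: "(\<lambda>t. \<bar>cos t\<bar>) integrable_on {a..c}" for a c :: real
    by (intro integrable_continuous_real continuous_intros)
  have p: "integral {-b..0} (\<lambda>t. \<bar>cos t\<bar>) = integral {2*pi-b..2*pi} (\<lambda>t. \<bar>cos t\<bar>)"
  proof -
    have "(((\<lambda>t. \<bar>cos t\<bar>) \<circ> (+) (2*pi)) has_integral integral {-b+2*pi..0+2*pi} (\<lambda>t. \<bar>cos t\<bar>)) {-b..0}"
      unfolding has_integral_shift_Icc_real using int by (simp add: integrable_integral)
    moreover have "((\<lambda>t. \<bar>cos t\<bar>) \<circ> (+) (2*pi)) = (\<lambda>t. \<bar>cos t\<bar>)"
      by (auto simp: fun_eq_iff cos_add)
    ultimately show ?thesis by (simp add: integral_unique algebra_simps)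
  qed
  have "integral {0..2*pi} (\<lambda>t. \<bar>cos t\<bar>) = integral {0..2*pi-b} (\<lambda>t. \<bar>cos t\<bar>) + integral {2*pi-b..2*pi} (\<lambda>t. \<bar>cos t\<bar>)"
    by (rule Henstock_Kurzweil_Integration.integral_combine[symmetric]) (use assms int in auto)
  moreover have "integral {-b..2*pi-b} (\<lambda>t. \<bar>cos t\<bar>) = integral {-b..0} (\<lambda>t. \<bar>cos t\<bar>) + integral {0..2*pi-b} (\<lambda>t. \<bar>cos t\<bar>)"
    by (rule Henstock_Kurzweil_Integration.integral_combine[symmetric]) (use assms int in auto)
  ultimately have "integral {-b..2*pi-b} (\<lambda>t. \<bar>cos t\<bar>) = 4"
    using p abscos_0_2pi integral_unique by force
  then have "((\<lambda>t. \<bar>cos t\<bar>) has_integral 4) {0 + - b..2*pi + - b}"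
    using int by (metis add.commute has_integral_integral uminus_add_conv_diff add_0)
  then have "(((\<lambda>t. \<bar>cos t\<bar>) \<circ> (+) (-b)) has_integral 4) {0..2*pi}"
    unfolding has_integral_shift_Icc_real .
  then show ?thesis by (simp add: o_def)
qed

lemma ang_abs:
  fixes A B :: real
  shows "(\<integral>\<^sup>+\<theta>. ennreal \<bar>A * cos \<theta> + B * sin \<theta>\<bar> * indicator {0..2*pi} \<theta> \<partial>lborel) = ennreal (4 * sqrt (A^2 + B^2))"
proof (cases "A^2 + B^2 = 0")
  case True
  then have "A = 0" "B = 0" by (auto simp: add_nonneg_eq_0_iff)
  then show ?thesis by simp
next
  case False
  define \<rho> where "\<rho> = sqrt (A^2 + B^2)"
  have "A^2 + B^2 > 0" using False by (metis add_nonneg_nonneg order_le_less zero_le_power2)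
  then have \<rho>: "\<rho> > 0" by (simp add: \<rho>_def)
  have r2: "\<rho>^2 = A^2 + B^2" using \<open>A^2 + B^2 > 0\<close> by (simp add: \<rho>_def)
  have "(A/\<rho>)^2 + (B/\<rho>)^2 = (A^2 + B^2) / \<rho>^2" by (simp add: power_divide add_divide_distrib)
  then have "(A/\<rho>)^2 + (B/\<rho>)^2 = 1" using r2 \<open>A^2 + B^2 > 0\<close> by (metis divide_self less_irrefl)
  then obtain b where b: "0 \<le> b" "b < 2*pi" "A/\<rho> = cos b" "B/\<rho> = sin b"
    by (rule sincos_total_2pi)
  have eq: "\<bar>A * cos \<theta> + B * sin \<theta>\<bar> = \<rho> * \<bar>cos (\<theta> - b)\<bar>" for \<theta>
  proof -
    have "A = \<rho> * cos b" "B = \<rho> * sin b" using b \<rho> by (auto simp: field_simps)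
    then have "A * cos \<theta> + B * sin \<theta> = \<rho> * cos (\<theta> - b)"
      by (simp add: cos_diff algebra_simps)
    then show ?thesis using \<rho> by (simp add: abs_mult)
  qed
  have "((\<lambda>\<theta>. \<bar>A * cos \<theta> + B * sin \<theta>\<bar>) has_integral \<rho> * 4) {0..2*pi}"
    unfolding eq using abscos_shift[of b] b by (intro has_integral_mult_right) auto
  then have "(\<integral>\<^sup>+\<theta>. ennreal \<bar>A * cos \<theta> + B * sin \<theta>\<bar> * indicator {0..2*pi} \<theta> \<partial>lborel) = ennreal (\<rho> * 4)"
    by (intro nn_integral_has_integral_lebesgue') auto
  then show ?thesis by (simp add: \<rho>_def mult.commute)
qed

lemma ang_sq:
  fixes A B :: real
  shows "(\<integral>\<^sup>+\<theta>. ennreal ((A * cos \<theta> + B * sin \<theta>)^2) * indicator {0..2*pi} \<theta> \<partial>lborel) = ennreal (pi * (A^2 + B^2))"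
proof -
  define F where "F \<theta> = A^2 * (\<theta> + sin \<theta> * cos \<theta>) / 2 + A * B * (sin \<theta>)^2 + B^2 * (\<theta> - sin \<theta> * cos \<theta>) / 2" for \<theta>
  have d: "(F has_real_derivative (A * cos \<theta> + B * sin \<theta>)^2) (at \<theta>)" for \<theta>
  proof -
    have "(F has_real_derivative A^2 * (1 + (cos \<theta> * cos \<theta> - sin \<theta> * sin \<theta>)) / 2 + A * B * (2 * sin \<theta> * cos \<theta>)
           + B^2 * (1 - (cos \<theta> * cos \<theta> - sin \<theta> * sin \<theta>)) / 2) (at \<theta>)"
      unfolding F_def by (auto intro!: derivative_eq_intros simp: power2_eq_square)
    moreover have "A^2 * (1 + (cos \<theta> * cos \<theta> - sin \<theta> * sin \<theta>)) / 2 + A * B * (2 * sin \<theta> * cos \<theta>)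
           + B^2 * (1 - (cos \<theta> * cos \<theta> - sin \<theta> * sin \<theta>)) / 2 = (A * cos \<theta> + B * sin \<theta>)^2"
    proof -
      have s: "sin \<theta> * sin \<theta> = 1 - cos \<theta> * cos \<theta>" using sin_cos_squared_add[of \<theta>] by (simp add: power2_eq_square)
      show ?thesis using s unfolding power2_eq_square by algebra
    qed
    ultimately show ?thesis by simp
  qed
  have "(\<integral>\<^sup>+\<theta>. ennreal ((A * cos \<theta> + B * sin \<theta>)^2) * indicator {0..2*pi} \<theta> \<partial>lborel) = ennreal (F (2*pi) - F 0)"
    by (rule ftc_nn_C) (auto intro: DERIV_subset[OF d])
  also have "F (2*pi) - F 0 = pi * (A^2 + B^2)" by (simp add: F_def algebra_simps)
  finally show ?thesis .
qed

lemma rot_alt: "rot t h = (\<chi> i. if i = 1 then h$1 * cos t - h$2 * sin t else h$1 * sin t + h$2 * cos t)"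
  by (simp add: vec_eq_iff forall_2)

lemma cont_rot_pair: "continuous_on UNIV (\<lambda>p::real \<times> (real^2). rot (fst p) (snd p))"
  unfolding rot_alt
  apply (intro continuous_on_vec_lambda)
  subgoal for i by (cases "i = 1") (auto intro!: continuous_intros)
  done

lemma meas_rot_pair [measurable (raw)]:
  assumes "f \<in> borel_measurable M" "g \<in> borel_measurable M"
  shows "(\<lambda>x. rot (f x) (g x)) \<in> borel_measurable M"
proof -
  have "(\<lambda>p::real \<times> (real^2). rot (fst p) (snd p)) \<in> borel_measurable (borel \<Otimes>\<^sub>M borel)"
    unfolding borel_prod by (intro borel_measurable_continuous_onI cont_rot_pair)
  from measurable_compose[OF measurable_Pair[OF assms] this] show ?thesis by simp
qed

lemma meas_vec_nth [measurable (raw)]: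
  assumes "f \<in> borel_measurable M"
  shows "(\<lambda>x. (f x :: real^2) $ i) \<in> borel_measurable M"
proof -
  have "(\<lambda>x::real^2. x $ i) \<in> borel_measurable borel"
    by (intro borel_measurable_continuous_onI continuous_intros)
  from measurable_compose[OF assms this] show ?thesis .
qed

lemma avg:
  fixes \<phi> :: "real^2 \<Rightarrow> ennreal"
  assumes [measurable]: "\<phi> \<in> borel_measurable borel"
  shows "ennreal (2*pi) * (\<integral>\<^sup>+h. \<phi> h \<partial>lborel) = (\<integral>\<^sup>+h. (\<integral>\<^sup>+t. indicator {0..2*pi} t * \<phi> (rot t h) \<partial>lborel) \<partial>lborel)"
proof -
  have "ennreal (2*pi) * (\<integral>\<^sup>+h. \<phi> h \<partial>lborel) = (\<integral>\<^sup>+t. (\<integral>\<^sup>+h. \<phi> h \<partial>lborel) * indicator {0..2*pi} t \<partial>lborel)"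
    by (subst nn_integral_cmult_indicator) (auto simp: mult.commute)
  also have "\<dots> = (\<integral>\<^sup>+t. indicator {0..2*pi} t * (\<integral>\<^sup>+h. \<phi> (rot t h) \<partial>lborel) \<partial>lborel)"
    by (simp add: nn_integral_rot mult.commute)
  also have "\<dots> = (\<integral>\<^sup>+t. (\<integral>\<^sup>+h. indicator {0..2*pi} t * \<phi> (rot t h) \<partial>lborel) \<partial>lborel)"
    by (subst nn_integral_cmult) auto
  also have "\<dots> = (\<integral>\<^sup>+h. (\<integral>\<^sup>+t. indicator {0..2*pi} t * \<phi> (rot t h) \<partial>lborel) \<partial>lborel)"
    by (rule lborel_pair.Fubini') measurable
  finally show ?thesis .
qed

lemma avg_sq:
  fixes K :: "real \<Rightarrow> real" and v :: "real^2"
  assumes [measurable]: "K \<in> borel_measurable borel" and K: "\<And>s. 0 \<le> K s"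
  shows "(\<integral>\<^sup>+(h::real^2). ennreal (K (norm h) * (v \<bullet> h)^2) \<partial>lborel)
       = ennreal ((norm v)^2 / 2) * (\<integral>\<^sup>+(h::real^2). ennreal (K (norm h) * (norm h)^2) \<partial>lborel)"
proof -
  have "ennreal (2*pi) * (\<integral>\<^sup>+(h::real^2). ennreal (K (norm h) * (v \<bullet> h)^2) \<partial>lborel)
     = (\<integral>\<^sup>+(h::real^2). (\<integral>\<^sup>+t. indicator {0..2*pi} t * ennreal (K (norm (rot t h)) * (v \<bullet> rot t h)^2) \<partial>lborel) \<partial>lborel)"
    by (rule avg) measurable
  also have "\<dots> = (\<integral>\<^sup>+(h::real^2). ennreal (K (norm h)) * ennreal (pi * ((norm v)^2 * (norm h)^2)) \<partial>lborel)"
  proof (rule nn_integral_cong, goal_cases)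
    case (1 h)
    have "(\<integral>\<^sup>+t. indicator {0..2*pi} t * ennreal (K (norm (rot t h)) * (v \<bullet> rot t h)^2) \<partial>lborel)
        = (\<integral>\<^sup>+t. ennreal (K (norm h)) * (ennreal (((v \<bullet> h) * cos t + (v$2 * h$1 - v$1 * h$2) * sin t)^2) * indicator {0..2*pi} t) \<partial>lborel)"
      using K by (intro nn_integral_cong) (simp add: inner_rot_expand ennreal_mult' mult_ac)
    also have "\<dots> = ennreal (K (norm h)) * ennreal (pi * ((v \<bullet> h)^2 + (v$2 * h$1 - v$1 * h$2)^2))"
      by (subst nn_integral_cmult) (auto simp: ang_sq)
    finally show "(\<integral>\<^sup>+t. indicator {0..2*pi} t * ennreal (K (norm (rot t h)) * (v \<bullet> rot t h)^2) \<partial>lborel)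
       = ennreal (K (norm h)) * ennreal (pi * ((norm v)^2 * (norm h)^2))"
      by (simp add: lagrange_R2)
  qed
  also have "\<dots> = (\<integral>\<^sup>+(h::real^2). ennreal (pi * (norm v)^2) * ennreal (K (norm h) * (norm h)^2) \<partial>lborel)"
    using K by (intro nn_integral_cong) (simp add: ennreal_mult'[symmetric] mult_ac)
  also have "\<dots> = ennreal (pi * (norm v)^2) * (\<integral>\<^sup>+(h::real^2). ennreal (K (norm h) * (norm h)^2) \<partial>lborel)"
    by (subst nn_integral_cmult) auto
  also have "\<dots> = ennreal (2*pi) * (ennreal ((norm v)^2 / 2) * (\<integral>\<^sup>+(h::real^2). ennreal (K (norm h) * (norm h)^2) \<partial>lborel))"
    by (simp add: ennreal_mult'[symmetric] mult.assoc[symmetric])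
  finally show ?thesis
    by (subst (asm) ennreal_mult_cancel_left) auto
qed

lemma avg_abs:
  fixes K :: "real \<Rightarrow> real" and v :: "real^2"
  assumes [measurable]: "K \<in> borel_measurable borel" and K: "\<And>s. 0 \<le> K s"
  shows "(\<integral>\<^sup>+(h::real^2). ennreal (K (norm h) * \<bar>v \<bullet> h\<bar>) \<partial>lborel)
       = ennreal (2 * norm v / pi) * (\<integral>\<^sup>+(h::real^2). ennreal (K (norm h) * norm h) \<partial>lborel)"
proof -
  have "ennreal (2*pi) * (\<integral>\<^sup>+(h::real^2). ennreal (K (norm h) * \<bar>v \<bullet> h\<bar>) \<partial>lborel)
     = (\<integral>\<^sup>+(h::real^2). (\<integral>\<^sup>+t. indicator {0..2*pi} t * ennreal (K (norm (rot t h)) * \<bar>v \<bullet> rot t h\<bar>) \<partial>lborel) \<partial>lborel)"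
    by (rule avg) measurable
  also have "\<dots> = (\<integral>\<^sup>+(h::real^2). ennreal (K (norm h)) * ennreal (4 * (norm v * norm h)) \<partial>lborel)"
  proof (rule nn_integral_cong, goal_cases)
    case (1 h)
    have "(\<integral>\<^sup>+t. indicator {0..2*pi} t * ennreal (K (norm (rot t h)) * \<bar>v \<bullet> rot t h\<bar>) \<partial>lborel)
        = (\<integral>\<^sup>+t. ennreal (K (norm h)) * (ennreal \<bar>(v \<bullet> h) * cos t + (v$2 * h$1 - v$1 * h$2) * sin t\<bar> * indicator {0..2*pi} t) \<partial>lborel)"
      using K by (intro nn_integral_cong) (simp add: inner_rot_expand ennreal_mult' mult_ac)
    also have "\<dots> = ennreal (K (norm h)) * ennreal (4 * sqrt ((v \<bullet> h)^2 + (v$2 * h$1 - v$1 * h$2)^2))"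
      by (subst nn_integral_cmult) (auto simp: ang_abs)
    also have "sqrt ((v \<bullet> h)^2 + (v$2 * h$1 - v$1 * h$2)^2) = norm v * norm h"
      by (simp add: lagrange_R2 real_sqrt_mult)
    finally show "(\<integral>\<^sup>+t. indicator {0..2*pi} t * ennreal (K (norm (rot t h)) * \<bar>v \<bullet> rot t h\<bar>) \<partial>lborel)
       = ennreal (K (norm h)) * ennreal (4 * (norm v * norm h))" .
  qed
  also have "\<dots> = (\<integral>\<^sup>+(h::real^2). ennreal (4 * norm v) * ennreal (K (norm h) * norm h) \<partial>lborel)"
    using K by (intro nn_integral_cong) (simp add: ennreal_mult'[symmetric] mult_ac)
  also have "\<dots> = ennreal (4 * norm v) * (\<integral>\<^sup>+(h::real^2). ennreal (K (norm h) * norm h) \<partial>lborel)"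
    by (subst nn_integral_cmult) auto
  also have "\<dots> = ennreal (2*pi) * (ennreal (2 * norm v / pi) * (\<integral>\<^sup>+(h::real^2). ennreal (K (norm h) * norm h) \<partial>lborel))"
    by (simp add: ennreal_mult'[symmetric] mult.assoc[symmetric])
  finally show ?thesis
    by (subst (asm) ennreal_mult_cancel_left) auto
qed

lemma E1:
  assumes "0 < r"
  shows "(\<integral>\<^sup>+(h::real^2). ennreal ((if 0 < norm h \<and> norm h < r then 1 / norm h ^ 3 else 0) * (norm h)^2) \<partial>lborel) \<le> ennreal (2 * pi * r)"
proof -
  have "(\<integral>\<^sup>+(h::real^2). ennreal ((if 0 < norm h \<and> norm h < r then 1 / norm h ^ 3 else 0) * (norm h)^2) \<partial>lborel)
     = (\<integral>\<^sup>+s. ennreal (2 * pi * s) * indicator {0 <..} s * ennreal ((if 0 < s \<and> s < r then 1 / s ^ 3 else 0) * s^2) \<partial>lborel)"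
    by (rule radial_R2) measurable
  also have "\<dots> \<le> (\<integral>\<^sup>+s. ennreal (2 * pi) * indicator {0..r} s \<partial>lborel)"
    by (intro nn_integral_mono) (auto simp: ennreal_mult'[symmetric] power2_eq_square power3_eq_cube split: split_indicator)
  also have "\<dots> = ennreal (2 * pi * r)"
    using assms by (subst nn_integral_cmult_indicator) (auto simp: ennreal_mult')
  finally show ?thesis .
qed

lemma E2:
  assumes "0 < r" "r \<le> R"
  shows "(\<integral>\<^sup>+(h::real^2). ennreal ((if r \<le> norm h \<and> norm h \<le> R then 1 / norm h ^ 3 else 0) * norm h) \<partial>lborel) \<le> ennreal (2 * pi * ln (R / r))"
proof -
  have "(\<integral>\<^sup>+(h::real^2). ennreal ((if r \<le> norm h \<and> norm h \<le> R then 1 / norm h ^ 3 else 0) * norm h) \<partial>lborel)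
     = (\<integral>\<^sup>+s. ennreal (2 * pi * s) * indicator {0 <..} s * ennreal ((if r \<le> s \<and> s \<le> R then 1 / s ^ 3 else 0) * s) \<partial>lborel)"
    by (rule radial_R2) measurable
  also have "\<dots> \<le> (\<integral>\<^sup>+s. ennreal (2 * pi / s) * indicator {r..R} s \<partial>lborel)"
    using assms by (intro nn_integral_mono) (auto simp: ennreal_mult'[symmetric] power2_eq_square power3_eq_cube split: split_indicator)
  also have "\<dots> = ennreal (2 * pi * ln R - 2 * pi * ln r)"
    using assms by (intro ftc_nn) (auto intro!: derivative_eq_intros)
  also have "2 * pi * ln R - 2 * pi * ln r = 2 * pi * ln (R / r)"
    using assms by (simp add: ln_div algebra_simps)
  finally show ?thesis .
qed

lemma E3:
  assumes "0 < R"
  shows "(\<integral>\<^sup>+(h::real^2). ennreal (if R < norm h \<and> norm h \<le> d then 1 / norm h else 0) \<partial>lborel)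
     \<le> ennreal (2 * pi * (if R < d then 1 else 0) * d)"
proof -
  have "(\<integral>\<^sup>+(h::real^2). ennreal (if R < norm h \<and> norm h \<le> d then 1 / norm h else 0) \<partial>lborel)
     = (\<integral>\<^sup>+s. ennreal (2 * pi * s) * indicator {0 <..} s * ennreal (if R < s \<and> s \<le> d then 1 / s else 0) \<partial>lborel)"
    by (rule radial_R2) measurable
  also have "\<dots> \<le> (\<integral>\<^sup>+s. ennreal (2 * pi * (if R < d then 1 else 0)) * indicator {0..d} s \<partial>lborel)"
    using assms by (intro nn_integral_mono) (auto simp: ennreal_mult'[symmetric] split: split_indicator)
  also have "\<dots> \<le> ennreal (2 * pi * (if R < d then 1 else 0) * d)"
    using assms by (subst nn_integral_cmult_indicator) (auto simp: ennreal_mult')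
  finally show ?thesis .
qed

lemma E4:
  assumes "0 < R"
  shows "(\<integral>\<^sup>+(h::real^2). ennreal (if R < norm h \<and> norm h \<le> d then 1 / norm h ^ 3 else 0) \<partial>lborel)
     \<le> ennreal (2 * pi * (if R < d then 1 else 0) / R)"
proof (cases "R < d")
  case False
  then have "(\<integral>\<^sup>+(h::real^2). ennreal (if R < norm h \<and> norm h \<le> d then 1 / norm h ^ 3 else 0) \<partial>lborel) = 0"
  proof -
    have "(\<lambda>h::real^2. ennreal (if R < norm h \<and> norm h \<le> d then 1 / norm h ^ 3 else 0)) = (\<lambda>_. 0)"
      using False by (auto simp: fun_eq_iff)
    then show ?thesis by simp
  qed
  then show ?thesis by simp
next
  case True
  have "(\<integral>\<^sup>+(h::real^2). ennreal (if R < norm h \<and> norm h \<le> d then 1 / norm h ^ 3 else 0) \<partial>lborel)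
     = (\<integral>\<^sup>+s. ennreal (2 * pi * s) * indicator {0 <..} s * ennreal (if R < s \<and> s \<le> d then 1 / s ^ 3 else 0) \<partial>lborel)"
    by (rule radial_R2) measurable
  also have "\<dots> \<le> (\<integral>\<^sup>+s. ennreal (2 * pi / s^2) * indicator {R..d} s \<partial>lborel)"
    using assms by (intro nn_integral_mono) (auto simp: ennreal_mult'[symmetric] power2_eq_square power3_eq_cube split: split_indicator)
  also have "\<dots> = ennreal ((- 2 * pi / d) - (- 2 * pi / R))"
    using assms True by (intro ftc_nn) (auto intro!: derivative_eq_intros simp: power2_eq_square)
  also have "\<dots> \<le> ennreal (2 * pi * (if R < d then 1 else 0) / R)"
    using assms True by (intro ennreal_leI) (auto simp: field_simps)
  finally show ?thesis .
qed

lemma nn_integral_shift: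
  fixes \<phi> :: "real^2 \<Rightarrow> ennreal"
  assumes [measurable]: "\<phi> \<in> borel_measurable borel"
  shows "(\<integral>\<^sup>+y. \<phi> (y + c) \<partial>lborel) = (\<integral>\<^sup>+h. \<phi> h \<partial>lborel)"
proof -
  have "(\<integral>\<^sup>+h. \<phi> h \<partial>lborel) = (\<integral>\<^sup>+h. \<phi> h \<partial>distr lborel borel ((+) c))"
    by (simp add: lborel_distr_plus)
  also have "\<dots> = (\<integral>\<^sup>+y. \<phi> (c + y) \<partial>lborel)"
    by (subst nn_integral_distr) auto
  finally show ?thesis by (simp add: add.commute)
qed

lemma chain:
  fixes P :: "real^2 \<Rightarrow> real^2 \<Rightarrow> ennreal" and Y :: "real^2 \<Rightarrow> ennreal"
    and W :: "real^2 \<Rightarrow> real^2 \<Rightarrow> ennreal" and U :: "(real^2) set"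
  assumes Pm: "(\<lambda>p. P (fst p) (snd p)) \<in> borel_measurable borel"
    and Ym [measurable]: "Y \<in> borel_measurable borel"
    and Um [measurable]: "U \<in> sets borel"
    and pw: "\<And>x y. x \<in> U \<Longrightarrow> y \<in> U \<Longrightarrow>
        W x y \<le> (\<integral>\<^sup>+t. indicator {0..1} t * P (x + t *\<^sub>R (y - x)) (y - x) \<partial>lborel) + Y (y - x)"
  shows "(\<integral>\<^sup>+x. indicator U x * (\<integral>\<^sup>+y. indicator U y * W x y \<partial>lborel) \<partial>lborel)
     \<le> (\<integral>\<^sup>+z. (\<integral>\<^sup>+h. P z h \<partial>lborel) \<partial>lborel) + emeasure lborel U * (\<integral>\<^sup>+h. Y h \<partial>lborel)"
proof -
  have PM [measurable (raw)]: "(\<lambda>w. P (f w) (g w)) \<in> borel_measurable M"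
    if "f \<in> borel_measurable M" "g \<in> borel_measurable M" for f g :: "'a \<Rightarrow> real^2" and M
  proof -
    have "(\<lambda>p. P (fst p) (snd p)) \<in> borel_measurable (borel \<Otimes>\<^sub>M borel)"
      using Pm by (simp add: borel_prod)
    from measurable_compose[OF measurable_Pair[OF that] this] show ?thesis by simp
  qed
  define Q where "Q x h = (\<integral>\<^sup>+t. indicator {0..1} t * P (x + t *\<^sub>R h) h \<partial>lborel)" for x h
  have Qm [measurable]: "(\<lambda>p. Q (fst p) (snd p)) \<in> borel_measurable (lborel \<Otimes>\<^sub>M lborel)"
    unfolding Q_def by measurable
  have QM [measurable (raw)]: "(\<lambda>w. Q (f w) (g w)) \<in> borel_measurable M"
    if "f \<in> borel_measurable M" "g \<in> borel_measurable M" for f g :: "'a \<Rightarrow> real^2" and M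
  proof -
    have "(\<lambda>p. Q (fst p) (snd p)) \<in> borel_measurable (borel \<Otimes>\<^sub>M borel)"
      using Qm by (simp add: measurable_lborel1 cong: measurable_cong_sets)
    from measurable_compose[OF measurable_Pair[OF that] this] show ?thesis by simp
  qed
  have inner: "(\<integral>\<^sup>+x. Q x h \<partial>lborel) = (\<integral>\<^sup>+z. P z h \<partial>lborel)" for h
  proof -
    have "(\<integral>\<^sup>+x. Q x h \<partial>lborel) = (\<integral>\<^sup>+t. (\<integral>\<^sup>+x. indicator {0..1} t * P (x + t *\<^sub>R h) h \<partial>lborel) \<partial>lborel)"
      unfolding Q_def by (rule lborel_pair.Fubini') measurable
    also have "\<dots> = (\<integral>\<^sup>+(t::real). indicator {0..1} t * (\<integral>\<^sup>+z. P z h \<partial>lborel) \<partial>lborel)"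
    proof (intro nn_integral_cong)
      fix t :: real
      have sh: "(\<integral>\<^sup>+x. P (x + t *\<^sub>R h) h \<partial>lborel) = (\<integral>\<^sup>+z. P z h \<partial>lborel)"
        by (rule nn_integral_shift) measurable
      have "(\<integral>\<^sup>+x. indicator {0..1} t * P (x + t *\<^sub>R h) h \<partial>lborel) = indicator {0..1} t * (\<integral>\<^sup>+x. P (x + t *\<^sub>R h) h \<partial>lborel)"
        by (rule nn_integral_cmult) measurable
      then show "(\<integral>\<^sup>+x. indicator {0..1} t * P (x + t *\<^sub>R h) h \<partial>lborel) = indicator {0..1} t * (\<integral>\<^sup>+z. P z h \<partial>lborel)"
        using sh by simp
    qed
    also have "\<dots> = (\<integral>\<^sup>+z. P z h \<partial>lborel)"
      by (subst mult.commute, subst nn_integral_cmult_indicator) auto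
    finally show ?thesis .
  qed
  have "(\<integral>\<^sup>+x. indicator U x * (\<integral>\<^sup>+y. indicator U y * W x y \<partial>lborel) \<partial>lborel)
     \<le> (\<integral>\<^sup>+x. indicator U x * (\<integral>\<^sup>+y. Q x (y - x) + Y (y - x) \<partial>lborel) \<partial>lborel)"
  proof (intro nn_integral_mono)
    fix x :: "real^2"
    show "indicator U x * (\<integral>\<^sup>+y. indicator U y * W x y \<partial>lborel) \<le> indicator U x * (\<integral>\<^sup>+y. Q x (y - x) + Y (y - x) \<partial>lborel)"
    proof (cases "x \<in> U")
      case True
      then have "(\<integral>\<^sup>+y. indicator U y * W x y \<partial>lborel) \<le> (\<integral>\<^sup>+y. Q x (y - x) + Y (y - x) \<partial>lborel)"
        unfolding Q_def using pw by (intro nn_integral_mono) (auto split: split_indicator)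
      then show ?thesis by (intro mult_left_mono) auto
    qed simp
  qed
  also have "\<dots> = (\<integral>\<^sup>+x. indicator U x * ((\<integral>\<^sup>+h. Q x h \<partial>lborel) + (\<integral>\<^sup>+h. Y h \<partial>lborel)) \<partial>lborel)"
  proof (intro nn_integral_cong arg_cong2[where f="(*)"] refl)
    fix x :: "real^2"
    have "(\<integral>\<^sup>+y. Q x (y - x) + Y (y - x) \<partial>lborel) = (\<integral>\<^sup>+y. Q x (y - x) \<partial>lborel) + (\<integral>\<^sup>+y. Y (y - x) \<partial>lborel)"
      by (intro nn_integral_add) measurable
    also have "\<dots> = (\<integral>\<^sup>+h. Q x h \<partial>lborel) + (\<integral>\<^sup>+h. Y h \<partial>lborel)"
      using nn_integral_shift[of "Q x" "-x"] nn_integral_shift[of Y "-x"] by simp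
    finally show "(\<integral>\<^sup>+y. Q x (y - x) + Y (y - x) \<partial>lborel) = (\<integral>\<^sup>+h. Q x h \<partial>lborel) + (\<integral>\<^sup>+h. Y h \<partial>lborel)" .
  qed
  also have "\<dots> \<le> (\<integral>\<^sup>+x. (\<integral>\<^sup>+h. Q x h \<partial>lborel) + (\<integral>\<^sup>+h. Y h \<partial>lborel) * indicator U x \<partial>lborel)"
    by (intro nn_integral_mono) (auto split: split_indicator)
  also have "\<dots> = (\<integral>\<^sup>+x. (\<integral>\<^sup>+h. Q x h \<partial>lborel) \<partial>lborel) + (\<integral>\<^sup>+h. Y h \<partial>lborel) * emeasure lborel U"
    by (subst nn_integral_add) (auto simp: nn_integral_cmult_indicator)
  also have "(\<integral>\<^sup>+x. (\<integral>\<^sup>+h. Q x h \<partial>lborel) \<partial>lborel) = (\<integral>\<^sup>+h. (\<integral>\<^sup>+x. Q x h \<partial>lborel) \<partial>lborel)"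
    by (rule lborel_pair.Fubini'[symmetric]) measurable
  also have "\<dots> = (\<integral>\<^sup>+h. (\<integral>\<^sup>+z. P z h \<partial>lborel) \<partial>lborel)"
    using inner by simp
  also have "\<dots> = (\<integral>\<^sup>+z. (\<integral>\<^sup>+h. P z h \<partial>lborel) \<partial>lborel)"
    by (rule lborel_pair.Fubini') measurable
  finally show ?thesis by (simp add: mult.commute)
qed

lemma seg_real:
  fixes f :: "real^2 \<Rightarrow> real" and g :: "real^2 \<Rightarrow> real^2"
  assumes U: "convex U"
    and der: "\<And>z. z \<in> U \<Longrightarrow> (f has_derivative (\<lambda>k. g z \<bullet> k)) (at z)"
    and gc: "continuous_on U g"
    and xy: "x \<in> U" "y \<in> U"
  shows "\<And>t. t \<in> {0..1} \<Longrightarrow> x + t *\<^sub>R (y - x) \<in> U"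
    and "continuous_on {0..1} (\<lambda>t. g (x + t *\<^sub>R (y - x)))"
    and "(f y - f x)^2 \<le> integral {0..1} (\<lambda>t. (g (x + t *\<^sub>R (y - x)) \<bullet> (y - x))^2)"
    and "\<bar>f y - f x\<bar> \<le> integral {0..1} (\<lambda>t. \<bar>g (x + t *\<^sub>R (y - x)) \<bullet> (y - x)\<bar>)"
proof -
  define h where "h = y - x"
  define u where "u t = g (x + t *\<^sub>R h) \<bullet> h" for t
  show inU: "x + t *\<^sub>R (y - x) \<in> U" if "t \<in> {0..1}" for t
  proof -
    have "x + t *\<^sub>R (y - x) = (1 - t) *\<^sub>R x + t *\<^sub>R y" by (simp add: algebra_simps)
    then show ?thesis using U xy that by (auto intro: convexD_alt)
  qed
  show gcs: "continuous_on {0..1} (\<lambda>t. g (x + t *\<^sub>R (y - x)))"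
    by (intro continuous_intros continuous_on_compose2[OF gc]) (auto intro: inU)
  have uc: "continuous_on {0..1} u"
    unfolding u_def h_def by (intro continuous_intros gcs)
  have d: "((\<lambda>t. f (x + t *\<^sub>R h)) has_vector_derivative u t) (at t within {0..1})" if "t \<in> {0..1}" for t
  proof -
    have "((\<lambda>t. x + t *\<^sub>R h) has_derivative (\<lambda>s. s *\<^sub>R h)) (at t)"
      by (auto intro!: derivative_eq_intros)
    from diff_chain_at[OF this der[OF inU[OF that, folded h_def]]]
    have "((\<lambda>t. f (x + t *\<^sub>R h)) has_derivative (\<lambda>s. s *\<^sub>R u t)) (at t)"
      by (simp add: o_def u_def inner_scaleR_right)
    then show ?thesis
      unfolding has_vector_derivative_def by (rule has_derivative_at_withinI)
  qed
  have iu: "(u has_integral (f y - f x)) {0..1}"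
    using fundamental_theorem_of_calculus[of 0 1 "\<lambda>t. f (x + t *\<^sub>R h)" u] d by (simp add: h_def)
  have int_abs: "((\<lambda>t. \<bar>u t\<bar>) has_integral integral {0..1} (\<lambda>t. \<bar>u t\<bar>)) {0..1}"
    by (intro integrable_integral integrable_continuous_real continuous_intros uc)
  have int_sq: "((\<lambda>t. (u t)^2) has_integral integral {0..1} (\<lambda>t. (u t)^2)) {0..1}"
    by (intro integrable_integral integrable_continuous_real continuous_intros uc)
  have "\<bar>f y - f x\<bar> \<le> integral {0..1} (\<lambda>t. \<bar>u t\<bar>)"
  proof -
    have "f y - f x \<le> integral {0..1} (\<lambda>t. \<bar>u t\<bar>)"
      by (rule has_integral_le[OF iu int_abs]) auto
    moreover have "- (f y - f x) \<le> integral {0..1} (\<lambda>t. \<bar>u t\<bar>)"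
      by (rule has_integral_le[OF has_integral_neg[OF iu] int_abs]) auto
    ultimately show ?thesis by linarith
  qed
  then show "\<bar>f y - f x\<bar> \<le> integral {0..1} (\<lambda>t. \<bar>g (x + t *\<^sub>R (y - x)) \<bullet> (y - x)\<bar>)"
    by (simp add: u_def h_def)
  define c where "c = f y - f x"
  have cc: "((\<lambda>t. c^2) has_integral c^2) {0..1::real}"
    using has_integral_const_real[of "c^2" 0 1] by simp
  have "((\<lambda>t. (u t)^2 - 2 * c * u t + c^2) has_integral (integral {0..1} (\<lambda>t. (u t)^2) - 2 * c * c + c^2)) {0..1}"
    by (intro has_integral_add has_integral_diff int_sq has_integral_mult_right) (auto simp: c_def iu cc[unfolded c_def])
  then have "0 \<le> integral {0..1} (\<lambda>t. (u t)^2) - 2 * c * c + c^2"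
  proof (rule has_integral_nonneg)
    fix t :: real
    have "0 \<le> (u t - c)^2" by simp
    then show "0 \<le> (u t)^2 - 2 * c * u t + c^2" by (simp add: power2_diff algebra_simps)
  qed
  then have "c^2 \<le> integral {0..1} (\<lambda>t. (u t)^2)" by (simp add: power2_eq_square)
  then show "(f y - f x)^2 \<le> integral {0..1} (\<lambda>t. (g (x + t *\<^sub>R (y - x)) \<bullet> (y - x))^2)"
    by (simp add: u_def h_def c_def)
qed

lemma seg:
  fixes f :: "real^2 \<Rightarrow> real" and g :: "real^2 \<Rightarrow> real^2"
  assumes U: "convex U"
    and der: "\<And>z. z \<in> U \<Longrightarrow> (f has_derivative (\<lambda>k. g z \<bullet> k)) (at z)"
    and gc: "continuous_on U g"
    and xy: "x \<in> U" "y \<in> U"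
  shows "ennreal ((f y - f x)^2) \<le> (\<integral>\<^sup>+t. ennreal ((g (x + t *\<^sub>R (y - x)) \<bullet> (y - x))^2) * indicator {0..1} t \<partial>lborel)"
    and "ennreal \<bar>f y - f x\<bar> \<le> (\<integral>\<^sup>+t. ennreal \<bar>g (x + t *\<^sub>R (y - x)) \<bullet> (y - x)\<bar> * indicator {0..1} t \<partial>lborel)"
proof -
  define h where "h = y - x"
  define u where "u t = g (x + t *\<^sub>R h) \<bullet> h" for t
  have inU: "x + t *\<^sub>R h \<in> U" if "t \<in> {0..1}" for t
  proof -
    have "x + t *\<^sub>R h = (1 - t) *\<^sub>R x + t *\<^sub>R y" by (simp add: h_def algebra_simps)
    then show ?thesis using U xy that by (auto intro: convexD_alt)
  qed
  have uc: "continuous_on {0..1} u"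
    unfolding u_def
    by (intro continuous_intros continuous_on_compose2[OF gc]) (auto intro: inU)
  have d: "((\<lambda>t. f (x + t *\<^sub>R h)) has_vector_derivative u t) (at t within {0..1})" if "t \<in> {0..1}" for t
  proof -
    have "((\<lambda>t. x + t *\<^sub>R h) has_derivative (\<lambda>s. s *\<^sub>R h)) (at t)"
      by (auto intro!: derivative_eq_intros)
    from diff_chain_at[OF this der[OF inU[OF that]]]
    have "((\<lambda>t. f (x + t *\<^sub>R h)) has_derivative (\<lambda>s. s *\<^sub>R u t)) (at t)"
      by (simp add: o_def u_def inner_scaleR_right)
    then show ?thesis
      unfolding has_vector_derivative_def by (rule has_derivative_at_withinI)
  qed
  have iu: "(u has_integral (f y - f x)) {0..1}"
    using fundamental_theorem_of_calculus[of 0 1 "\<lambda>t. f (x + t *\<^sub>R h)" u] d by (simp add: h_def)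
  have int_abs: "((\<lambda>t. \<bar>u t\<bar>) has_integral integral {0..1} (\<lambda>t. \<bar>u t\<bar>)) {0..1}"
    by (intro integrable_integral integrable_continuous_real continuous_intros uc)
  have int_sq: "((\<lambda>t. (u t)^2) has_integral integral {0..1} (\<lambda>t. (u t)^2)) {0..1}"
    by (intro integrable_integral integrable_continuous_real continuous_intros uc)
  have "\<bar>f y - f x\<bar> \<le> integral {0..1} (\<lambda>t. \<bar>u t\<bar>)"
  proof -
    have "f y - f x \<le> integral {0..1} (\<lambda>t. \<bar>u t\<bar>)"
      by (rule has_integral_le[OF iu int_abs]) auto
    moreover have "- (f y - f x) \<le> integral {0..1} (\<lambda>t. \<bar>u t\<bar>)"
      by (rule has_integral_le[OF has_integral_neg[OF iu] int_abs]) auto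
    ultimately show ?thesis by linarith
  qed
  also have "ennreal (integral {0..1} (\<lambda>t. \<bar>u t\<bar>)) = (\<integral>\<^sup>+t. ennreal \<bar>u t\<bar> * indicator {0..1} t \<partial>lborel)"
    by (rule nn_integral_has_integral_lebesgue'[symmetric]) (auto intro: int_abs)
  finally show "ennreal \<bar>f y - f x\<bar> \<le> (\<integral>\<^sup>+t. ennreal \<bar>g (x + t *\<^sub>R (y - x)) \<bullet> (y - x)\<bar> * indicator {0..1} t \<partial>lborel)"
    by (simp add: u_def h_def ennreal_leI)
  define c where "c = f y - f x"
  have cc: "((\<lambda>t. c^2) has_integral c^2) {0..1::real}"
    using has_integral_const_real[of "c^2" 0 1] by simp
  have "((\<lambda>t. (u t)^2 - 2 * c * u t + c^2) has_integral (integral {0..1} (\<lambda>t. (u t)^2) - 2 * c * c + c^2)) {0..1}"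
    by (intro has_integral_add has_integral_diff int_sq has_integral_mult_right) (auto simp: c_def iu cc[unfolded c_def])
  then have "0 \<le> integral {0..1} (\<lambda>t. (u t)^2) - 2 * c * c + c^2"
  proof (rule has_integral_nonneg)
    fix t :: real
    have "0 \<le> (u t - c)^2" by simp
    then show "0 \<le> (u t)^2 - 2 * c * u t + c^2" by (simp add: power2_diff algebra_simps)
  qed
  then have "c^2 \<le> integral {0..1} (\<lambda>t. (u t)^2)" by (simp add: power2_eq_square)
  then have "ennreal (c^2) \<le> ennreal (integral {0..1} (\<lambda>t. (u t)^2))" by (rule ennreal_leI)
  also have "ennreal (integral {0..1} (\<lambda>t. (u t)^2)) = (\<integral>\<^sup>+t. ennreal ((u t)^2) * indicator {0..1} t \<partial>lborel)"
    by (rule nn_integral_has_integral_lebesgue'[symmetric]) (auto intro: int_sq)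
  finally show "ennreal ((f y - f x)^2) \<le> (\<integral>\<^sup>+t. ennreal ((g (x + t *\<^sub>R (y - x)) \<bullet> (y - x))^2) * indicator {0..1} t \<partial>lborel)"
    by (simp add: u_def h_def c_def)
qed

definition K1 :: "real \<Rightarrow> real \<Rightarrow> real" where "K1 r s = (if 0 < s \<and> s < r then 1 / s ^ 3 else 0)"
definition K2 :: "real \<Rightarrow> real \<Rightarrow> real \<Rightarrow> real" where "K2 r R s = (if r \<le> s \<and> s \<le> R then 1 / s ^ 3 else 0)"
definition psi3 :: "real \<Rightarrow> real \<Rightarrow> real \<Rightarrow> real" where "psi3 R d s = (if R < s \<and> s \<le> d then 1 / s else 0)"
definition psi4 :: "real \<Rightarrow> real \<Rightarrow> real \<Rightarrow> real" where "psi4 R d s = (if R < s \<and> s \<le> d then 1 / s ^ 3 else 0)"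

lemma K_nonneg: "0 \<le> K1 r s" "0 \<le> r \<Longrightarrow> 0 \<le> K2 r R s" "0 \<le> R \<Longrightarrow> 0 \<le> psi3 R d s" "0 \<le> R \<Longrightarrow> 0 \<le> psi4 R d s"
  by (auto simp: K1_def K2_def psi3_def psi4_def)

lemma K_meas [measurable]: "K1 r \<in> borel_measurable borel" "K2 r R \<in> borel_measurable borel"
  "psi3 R d \<in> borel_measurable borel" "psi4 R d \<in> borel_measurable borel"
  unfolding K1_def[abs_def] K2_def[abs_def] psi3_def[abs_def] psi4_def[abs_def] by measurable

lemma real_case_bound:
  fixes \<Delta> \<rho> I0 I1 I2 M r R d c3 :: real
  assumes "0 \<le> \<rho>" "0 < r" "r \<le> R" "\<rho> \<le> d" "0 \<le> M"
    and "\<bar>\<Delta>\<bar> \<le> 2 * M" "\<Delta>^2 \<le> I2" "\<bar>\<Delta>\<bar> \<le> I1" "I1 \<le> \<rho> * I0"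
    and "0 \<le> I0" "0 \<le> I2" "c3 = 0 \<or> c3 = 1"
  shows "\<Delta>^2 / \<rho>^3 \<le> K1 r \<rho> * I2 + 2 * M * (K2 r R \<rho> * I1) + c3 * (2 * M / R) * (norm I0 * psi3 R d \<rho>)
           + (1 - c3) * 4 * M^2 * psi4 R d \<rho>"
proof -
  have I1: "0 \<le> I1" using assms(8) by linarith
  have c3: "0 \<le> c3" "0 \<le> 1 - c3" using assms(12) by auto
  have nn: "0 \<le> K1 r \<rho> * I2" "0 \<le> 2 * M * (K2 r R \<rho> * I1)" "0 \<le> c3 * (2 * M / R) * (norm I0 * psi3 R d \<rho>)"
     "0 \<le> (1 - c3) * 4 * M^2 * psi4 R d \<rho>"
    using assms I1 c3 by (auto intro!: mult_nonneg_nonneg simp: K_nonneg)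
  have sq: "\<Delta>^2 \<le> 2 * M * \<bar>\<Delta>\<bar>"
  proof -
    have "\<Delta>^2 = \<bar>\<Delta>\<bar> * \<bar>\<Delta>\<bar>" by (simp add: power2_eq_square)
    also have "\<dots> \<le> 2 * M * \<bar>\<Delta>\<bar>" by (rule mult_right_mono[OF assms(6) abs_ge_zero])
    finally show ?thesis .
  qed
  have sq1: "\<Delta>^2 \<le> 2 * M * I1"
    using sq mult_left_mono[OF assms(8), of "2 * M"] assms(5) by linarith
  have sq0: "\<Delta>^2 \<le> 2 * M * (\<rho> * I0)"
    using sq1 mult_left_mono[OF assms(9), of "2 * M"] assms(5) by linarith
  show ?thesis
  proof (cases "\<rho> = 0")
    case True then show ?thesis using nn by simp
  next
    case False
    then have \<rho>: "0 < \<rho>" using assms(1) by simp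
    consider "\<rho> < r" | "r \<le> \<rho> \<and> \<rho> \<le> R" | "R < \<rho>" by linarith
    then show ?thesis
    proof cases
      case 1
      then have "\<Delta>^2 / \<rho>^3 \<le> K1 r \<rho> * I2"
        using \<rho> assms(7) by (simp add: K1_def divide_right_mono)
      then show ?thesis using nn by linarith
    next
      case 2
      have "\<Delta>^2 / \<rho>^3 \<le> (2 * M * I1) / \<rho>^3"
        using sq1 \<rho> by (intro divide_right_mono) auto
      also have "\<dots> = 2 * M * (K2 r R \<rho> * I1)" using 2 by (simp add: K2_def)
      finally show ?thesis using nn by linarith
    next
      case 3
      show ?thesis
      proof (cases "c3 = 1")
        case True
        have "\<Delta>^2 / \<rho>^3 \<le> (2 * M * (\<rho> * I0)) / \<rho>^3"
          using sq0 \<rho> by (intro divide_right_mono) auto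
        also have "\<dots> = (2 * M * I0) / \<rho>^2"
          using \<rho> by (simp add: power2_eq_square power3_eq_cube)
        also have "\<dots> \<le> (2 * M * I0) / (R * \<rho>)"
          using \<rho> 3 assms(2,3,5,10) by (intro divide_left_mono) (auto simp: power2_eq_square intro!: mult_right_mono mult_pos_pos)
        also have "\<dots> = c3 * (2 * M / R) * (norm I0 * psi3 R d \<rho>)"
          using True 3 assms(4,10) by (simp add: psi3_def)
        finally show ?thesis using nn by linarith
      next
        case False
        then have "c3 = 0" using assms(12) by auto
        have "\<Delta>^2 \<le> 4 * M^2"
        proof -
          have "\<Delta>^2 = \<bar>\<Delta>\<bar>^2" by simp
          also have "\<dots> \<le> (2 * M)^2" using assms(6) by (intro power_mono) auto
          finally show ?thesis by (simp add: power2_eq_square)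
        qed
        then have "\<Delta>^2 / \<rho>^3 \<le> 4 * M^2 / \<rho>^3"
          using \<rho> by (intro divide_right_mono) auto
        also have "\<dots> = (1 - c3) * 4 * M^2 * psi4 R d \<rho>"
          using \<open>c3 = 0\<close> 3 assms(4) by (simp add: psi4_def)
        finally show ?thesis using nn by linarith
      qed
    qed
  qed
qed


definition Gr :: "(real^2) set \<Rightarrow> (real^2 \<Rightarrow> real^2) \<Rightarrow> real^2 \<Rightarrow> real^2" where
  "Gr U g z = (if z \<in> U then g z else 0)"
definition fr :: "(real^2) set \<Rightarrow> (real^2 \<Rightarrow> real) \<Rightarrow> real^2 \<Rightarrow> real" where
  "fr U f z = (if z \<in> U then f z else 0)"
definition Pk :: "(real^2) set \<Rightarrow> (real^2 \<Rightarrow> real^2) \<Rightarrow> real \<Rightarrow> real \<Rightarrow> real \<Rightarrow> real \<Rightarrow> real \<Rightarrow> real^2 \<Rightarrow> real^2 \<Rightarrow> ennreal" where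
  "Pk U g M r R d c3 z h = ennreal (K1 r (norm h) * (Gr U g z \<bullet> h)^2) + ennreal (2 * M * (K2 r R (norm h) * \<bar>Gr U g z \<bullet> h\<bar>))
     + ennreal (c3 * (2 * M / R) * (norm (Gr U g z) * psi3 R d (norm h)))"
definition Yk :: "real \<Rightarrow> real \<Rightarrow> real \<Rightarrow> real \<Rightarrow> real^2 \<Rightarrow> ennreal" where
  "Yk M R d c3 h = ennreal ((1 - c3) * 4 * M^2 * psi4 R d (norm h))"

locale core =
  fixes \<Omega> U :: "(real^2) set" and f :: "real^2 \<Rightarrow> real" and g :: "real^2 \<Rightarrow> real^2" and M d r R :: real
  assumes U_open: "open U" and U_convex: "convex U" and U_sub: "U \<subseteq> \<Omega>"
    and der: "\<And>z. z \<in> U \<Longrightarrow> (f has_derivative (\<lambda>k. g z \<bullet> k)) (at z)"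
    and gc: "continuous_on U g"
    and fM: "\<And>x. x \<in> \<Omega> \<Longrightarrow> \<bar>f x\<bar> \<le> M" and M0: "0 \<le> M"
    and diam: "\<And>x y. x \<in> \<Omega> \<Longrightarrow> y \<in> \<Omega> \<Longrightarrow> dist x y \<le> d"
    and rR: "0 < r" "r \<le> R"

context core
begin

lemma pointwise:
  assumes x: "x \<in> U" and y: "y \<in> U" and c3: "c3 = 0 \<or> c3 = 1"
  shows "ennreal ((fr U f x - fr U f y)^2 / (dist x y)^3)
     \<le> (\<integral>\<^sup>+t. indicator {0..1} t * Pk U g M r R d c3 (x + t *\<^sub>R (y - x)) (y - x) \<partial>lborel) + Yk M R d c3 (y - x)"
proof -
  have S1: "x + t *\<^sub>R (y - x) \<in> U" if "t \<in> {0..1}" for t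
    using seg_real(1)[of U f g x y t] U_convex der gc x y that by blast
  have S2: "continuous_on {0..1} (\<lambda>t. g (x + t *\<^sub>R (y - x)))"
    using seg_real(2)[of U f g x y] U_convex der gc x y by blast
  have S3: "(f y - f x)^2 \<le> integral {0..1} (\<lambda>t. (g (x + t *\<^sub>R (y - x)) \<bullet> (y - x))^2)"
    using seg_real(3)[of U f g x y] U_convex der gc x y by blast
  have S4: "\<bar>f y - f x\<bar> \<le> integral {0..1} (\<lambda>t. \<bar>g (x + t *\<^sub>R (y - x)) \<bullet> (y - x)\<bar>)"
    using seg_real(4)[of U f g x y] U_convex der gc x y by blast
  define h where "h = y - x"
  define \<rho> where "\<rho> = norm h"
  define Gt where "Gt t = g (x + t *\<^sub>R h)" for t
  have Gtc: "continuous_on {0..1} Gt" using S2 by (simp add: Gt_def h_def)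
  define I2 where "I2 = integral {0..1} (\<lambda>t. (Gt t \<bullet> h)^2)"
  define I1 where "I1 = integral {0..1} (\<lambda>t. \<bar>Gt t \<bullet> h\<bar>)"
  define I0 where "I0 = integral {0..1} (\<lambda>t. norm (Gt t))"
  have hI2: "((\<lambda>t. (Gt t \<bullet> h)^2) has_integral I2) {0..1}"
    unfolding I2_def by (intro integrable_integral integrable_continuous_real continuous_intros Gtc)
  have hI1: "((\<lambda>t. \<bar>Gt t \<bullet> h\<bar>) has_integral I1) {0..1}"
    unfolding I1_def by (intro integrable_integral integrable_continuous_real continuous_intros Gtc)
  have hI0: "((\<lambda>t. norm (Gt t)) has_integral I0) {0..1}"
    unfolding I0_def by (intro integrable_integral integrable_continuous_real continuous_intros Gtc)
  have I0: "0 \<le> I0" by (rule has_integral_nonneg[OF hI0]) auto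
  have I2: "0 \<le> I2" by (rule has_integral_nonneg[OF hI2]) auto
  have I10: "I1 \<le> \<rho> * I0"
  proof -
    have "((\<lambda>t. norm (Gt t) * \<rho>) has_integral I0 * \<rho>) {0..1}"
      by (rule has_integral_mult_left[OF hI0])
    then have "I1 \<le> I0 * \<rho>"
      by (rule has_integral_le[OF hI1]) (simp add: \<rho>_def Cauchy_Schwarz_ineq2)
    then show ?thesis by (simp add: mult.commute)
  qed
  have xO: "x \<in> \<Omega>" and yO: "y \<in> \<Omega>" using x y U_sub by auto
  have \<Delta>M: "\<bar>f y - f x\<bar> \<le> 2 * M" using fM[OF xO] fM[OF yO] by linarith
  have \<rho>d: "\<rho> \<le> d" using diam[OF xO yO] by (simp add: \<rho>_def h_def dist_norm norm_minus_commute)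
  have rb: "(f y - f x)^2 / \<rho>^3 \<le> K1 r \<rho> * I2 + 2 * M * (K2 r R \<rho> * I1) + c3 * (2 * M / R) * (norm I0 * psi3 R d \<rho>)
           + (1 - c3) * 4 * M^2 * psi4 R d \<rho>"
    by (rule real_case_bound) (use rR M0 \<Delta>M \<rho>d S3 S4 I10 I0 I2 c3 in \<open>auto simp: \<rho>_def I2_def I1_def Gt_def h_def\<close>)
  define A where "A = K1 r \<rho> * I2 + 2 * M * (K2 r R \<rho> * I1) + c3 * (2 * M / R) * (I0 * psi3 R d \<rho>)"
  define B where "B = (1 - c3) * 4 * M^2 * psi4 R d \<rho>"
  have c3n: "0 \<le> c3" "0 \<le> 1 - c3" using c3 by auto
  have B0: "0 \<le> B" unfolding B_def using c3n rR by (intro mult_nonneg_nonneg K_nonneg) auto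
  define \<Phi> where "\<Phi> t = K1 r \<rho> * (Gt t \<bullet> h)^2 + 2 * M * (K2 r R \<rho> * \<bar>Gt t \<bullet> h\<bar>) + c3 * (2 * M / R) * (norm (Gt t) * psi3 R d \<rho>)" for t
  have h\<Phi>: "(\<Phi> has_integral A) {0..1}"
    unfolding \<Phi>_def A_def
    by (intro has_integral_add has_integral_mult_right has_integral_mult_left hI2 hI1 hI0)
  have \<Phi>0: "0 \<le> \<Phi> t" for t
    unfolding \<Phi>_def using c3n rR M0 by (intro add_nonneg_nonneg mult_nonneg_nonneg K_nonneg) auto
  have "(\<integral>\<^sup>+t. indicator {0..1} t * Pk U g M r R d c3 (x + t *\<^sub>R (y - x)) (y - x) \<partial>lborel)
      = (\<integral>\<^sup>+t. ennreal (\<Phi> t) * indicator {0..1} t \<partial>lborel)"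
  proof (intro nn_integral_cong)
    fix t :: real
    show "indicator {0..1} t * Pk U g M r R d c3 (x + t *\<^sub>R (y - x)) (y - x) = ennreal (\<Phi> t) * indicator {0..1} t"
    proof (cases "t \<in> {0..1}")
      case True
      then have "Gr U g (x + t *\<^sub>R (y - x)) = Gt t" using S1[OF True] by (simp add: Gr_def Gt_def h_def)
      moreover have "0 \<le> K1 r \<rho> * (Gt t \<bullet> h)^2" "0 \<le> 2 * M * (K2 r R \<rho> * \<bar>Gt t \<bullet> h\<bar>)"
        using c3n rR M0 by (auto intro!: mult_nonneg_nonneg K_nonneg)
      moreover have "0 \<le> c3 * (2 * M / R) * (norm (Gt t) * psi3 R d \<rho>)"
        using c3n rR M0 by (intro mult_nonneg_nonneg divide_nonneg_nonneg K_nonneg) auto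
      ultimately have "Pk U g M r R d c3 (x + t *\<^sub>R (y - x)) (y - x) = ennreal (\<Phi> t)"
        unfolding Pk_def \<Phi>_def by (simp add: h_def[symmetric] \<rho>_def[symmetric] ennreal_plus)
      then show ?thesis using True by simp
    qed simp
  qed
  also have "\<dots> = ennreal A"
    by (rule nn_integral_has_integral_lebesgue'[OF _ h\<Phi>]) (rule \<Phi>0)
  finally have eqA: "(\<integral>\<^sup>+t. indicator {0..1} t * Pk U g M r R d c3 (x + t *\<^sub>R (y - x)) (y - x) \<partial>lborel) = ennreal A" .
  have eqB: "Yk M R d c3 (y - x) = ennreal B" by (simp add: Yk_def B_def \<rho>_def h_def)
  have W: "(fr U f x - fr U f y)^2 / (dist x y)^3 = (f y - f x)^2 / \<rho>^3"
    using x y by (simp add: fr_def \<rho>_def h_def dist_norm norm_minus_commute power2_commute)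
  have A0: "0 \<le> A" by (rule has_integral_nonneg[OF h\<Phi> \<Phi>0])
  have "(f y - f x)^2 / \<rho>^3 \<le> A + B" using rb I0 by (simp add: A_def B_def)
  then have "ennreal ((f y - f x)^2 / \<rho>^3) \<le> ennreal (A + B)" by (rule ennreal_leI)
  also have "\<dots> = ennreal A + ennreal B" by (rule ennreal_plus[OF A0 B0])
  finally have "ennreal ((f y - f x)^2 / \<rho>^3) \<le> ennreal A + ennreal B" .
  then show ?thesis unfolding eqA eqB W .
qed

end

lemma nn_cmult_real:
  fixes \<phi> :: "'a \<Rightarrow> real"
  assumes "0 \<le> c" "\<And>x. 0 \<le> \<phi> x" "\<phi> \<in> borel_measurable M"
  shows "(\<integral>\<^sup>+x. ennreal (c * \<phi> x) \<partial>M) = ennreal c * (\<integral>\<^sup>+x. ennreal (\<phi> x) \<partial>M)"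
proof -
  have "(\<integral>\<^sup>+x. ennreal (c * \<phi> x) \<partial>M) = (\<integral>\<^sup>+x. ennreal c * ennreal (\<phi> x) \<partial>M)"
    using assms by (intro nn_integral_cong) (simp add: ennreal_mult)
  also have "\<dots> = ennreal c * (\<integral>\<^sup>+x. ennreal (\<phi> x) \<partial>M)"
    using assms by (intro nn_integral_cmult) auto
  finally show ?thesis .
qed

context core
begin

lemma U_borel [measurable]: "U \<in> sets borel"
  using U_open by simp

lemma f_cont: "continuous_on U f"
  using der by (intro continuous_at_imp_continuous_on ballI has_derivative_continuous) blast

lemma Gr_meas [measurable]: "Gr U g \<in> borel_measurable borel"
  unfolding Gr_def[abs_def] by (intro borel_measurable_continuous_on_if U_borel gc continuous_on_const)

lemma fr_meas [measurable]: "fr U f \<in> borel_measurable borel"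
  unfolding fr_def[abs_def] by (intro borel_measurable_continuous_on_if U_borel f_cont continuous_on_const)

lemma Pk_meas: "(\<lambda>p. Pk U g M r R d c3 (fst p) (snd p)) \<in> borel_measurable borel"
proof -
  have "(\<lambda>p. Pk U g M r R d c3 (fst p) (snd p)) \<in> borel_measurable (borel \<Otimes>\<^sub>M borel)"
    unfolding Pk_def by measurable
  then show ?thesis by (simp add: borel_prod)
qed

lemma Yk_meas [measurable]: "Yk M R d c3 \<in> borel_measurable borel"
  unfolding Yk_def[abs_def] by measurable

lemma core_chain:
  assumes c3: "c3 = 0 \<or> c3 = 1"
  shows "(\<integral>\<^sup>+x. indicator U x * (\<integral>\<^sup>+y. indicator U y * ennreal ((fr U f x - fr U f y)^2 / (dist x y)^3) \<partial>lborel) \<partial>lborel)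
     \<le> (\<integral>\<^sup>+z. (\<integral>\<^sup>+h. Pk U g M r R d c3 z h \<partial>lborel) \<partial>lborel) + emeasure lborel U * (\<integral>\<^sup>+h. Yk M R d c3 h \<partial>lborel)"
  by (rule chain[OF Pk_meas Yk_meas U_borel]) (rule pointwise[OF _ _ c3])

lemma inner_bound:
  assumes c3: "c3 = 0 \<or> c3 = 1"
  shows "(\<integral>\<^sup>+h. Pk U g M r R d c3 z h \<partial>lborel)
    \<le> ennreal (pi * r) * ennreal ((norm (Gr U g z))^2)
      + ennreal (8 * M * ln (R / r) + c3 * 4 * pi * M * (if R < d then 1 else 0) * d / R) * ennreal (norm (Gr U g z))"
proof -
  define v where "v = Gr U g z"
  have c3n: "0 \<le> c3" using c3 by auto
  have Rp: "0 < R" using rR by linarith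
  have lnp: "0 \<le> ln (R / r)" using rR by simp
  have eq0: "(\<integral>\<^sup>+h. Pk U g M r R d c3 z h \<partial>lborel)
      = (\<integral>\<^sup>+(h::real^2). ennreal (K1 r (norm h) * (v \<bullet> h)^2) \<partial>lborel)
      + (\<integral>\<^sup>+(h::real^2). ennreal (2 * M * (K2 r R (norm h) * \<bar>v \<bullet> h\<bar>)) \<partial>lborel)
      + (\<integral>\<^sup>+(h::real^2). ennreal (c3 * (2 * M / R) * (norm v * psi3 R d (norm h))) \<partial>lborel)"
    unfolding Pk_def v_def by (simp add: nn_integral_add)
  have T1: "(\<integral>\<^sup>+(h::real^2). ennreal (K1 r (norm h) * (v \<bullet> h)^2) \<partial>lborel) \<le> ennreal (pi * r * (norm v)^2)"
  proof -
    have "(\<integral>\<^sup>+(h::real^2). ennreal (K1 r (norm h) * (v \<bullet> h)^2) \<partial>lborel)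
        = ennreal ((norm v)^2 / 2) * (\<integral>\<^sup>+(h::real^2). ennreal (K1 r (norm h) * (norm h)^2) \<partial>lborel)"
      by (rule avg_sq) (auto simp: K_nonneg)
    also have "\<dots> \<le> ennreal ((norm v)^2 / 2) * ennreal (2 * pi * r)"
      using E1[OF rR(1)] by (intro mult_left_mono) (auto simp: K1_def)
    also have "\<dots> = ennreal ((norm v)^2 / 2 * (2 * pi * r))"
      using rR by (intro ennreal_mult[symmetric]) auto
    also have "\<dots> = ennreal (pi * r * (norm v)^2)"
      by (simp add: field_simps)
    finally show ?thesis .
  qed
  have T2: "(\<integral>\<^sup>+(h::real^2). ennreal (2 * M * (K2 r R (norm h) * \<bar>v \<bullet> h\<bar>)) \<partial>lborel) \<le> ennreal (8 * M * ln (R / r) * norm v)"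
  proof -
    have "(\<integral>\<^sup>+(h::real^2). ennreal (2 * M * (K2 r R (norm h) * \<bar>v \<bullet> h\<bar>)) \<partial>lborel)
        = ennreal (2 * M) * (\<integral>\<^sup>+(h::real^2). ennreal (K2 r R (norm h) * \<bar>v \<bullet> h\<bar>) \<partial>lborel)"
      using M0 rR by (intro nn_cmult_real mult_nonneg_nonneg K_nonneg) auto
    also have "(\<integral>\<^sup>+(h::real^2). ennreal (K2 r R (norm h) * \<bar>v \<bullet> h\<bar>) \<partial>lborel)
        = ennreal (2 * norm v / pi) * (\<integral>\<^sup>+(h::real^2). ennreal (K2 r R (norm h) * norm h) \<partial>lborel)"
      by (rule avg_abs) (use rR in \<open>auto simp: K_nonneg\<close>)
    also have "\<dots> \<le> ennreal (2 * norm v / pi) * ennreal (2 * pi * ln (R / r))"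
      using E2[OF rR] by (intro mult_left_mono) (auto simp: K2_def)
    also have "ennreal (2 * M) * (ennreal (2 * norm v / pi) * ennreal (2 * pi * ln (R / r))) = ennreal (8 * M * ln (R / r) * norm v)"
      using M0 lnp by (simp add: ennreal_mult'[symmetric] ennreal_mult[symmetric])
    finally show ?thesis by (simp add: mult_left_mono)
  qed
  have T3: "(\<integral>\<^sup>+(h::real^2). ennreal (c3 * (2 * M / R) * (norm v * psi3 R d (norm h))) \<partial>lborel)
      \<le> ennreal (c3 * 4 * pi * M * (if R < d then 1 else 0) * d / R * norm v)"
  proof -
    have "(\<integral>\<^sup>+(h::real^2). ennreal (c3 * (2 * M / R) * (norm v * psi3 R d (norm h))) \<partial>lborel)
        = ennreal (c3 * (2 * M / R) * norm v) * (\<integral>\<^sup>+(h::real^2). ennreal (psi3 R d (norm h)) \<partial>lborel)"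
    proof -
      have e: "\<And>h::real^2. c3 * (2 * M / R) * (norm v * psi3 R d (norm h)) = (c3 * (2 * M / R) * norm v) * psi3 R d (norm h)"
        by (simp add: mult.assoc)
      show ?thesis unfolding e
        by (rule nn_cmult_real) (use M0 c3n Rp in \<open>auto simp: K_nonneg\<close>)
    qed
    also have "\<dots> \<le> ennreal (c3 * (2 * M / R) * norm v) * ennreal (2 * pi * (if R < d then 1 else 0) * d)"
      using E3[OF Rp, of d] by (intro mult_left_mono) (auto simp: psi3_def)
    also have "\<dots> = ennreal (c3 * 4 * pi * M * (if R < d then 1 else 0) * d / R * norm v)"
      using M0 c3n Rp by (auto simp: ennreal_mult[symmetric] ennreal_mult'[symmetric])
    finally show ?thesis .
  qed
  have "(\<integral>\<^sup>+h. Pk U g M r R d c3 z h \<partial>lborel)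
     \<le> ennreal (pi * r * (norm v)^2) + ennreal (8 * M * ln (R / r) * norm v)
       + ennreal (c3 * 4 * pi * M * (if R < d then 1 else 0) * d / R * norm v)"
    unfolding eq0 by (intro add_mono T1 T2 T3)
  also have "\<dots> = ennreal (pi * r) * ennreal ((norm v)^2)
      + ennreal (8 * M * ln (R / r) + c3 * 4 * pi * M * (if R < d then 1 else 0) * d / R) * ennreal (norm v)"
  proof -
    have a: "ennreal (pi * r) * ennreal ((norm v)^2) = ennreal (pi * r * (norm v)^2)"
      using rR by (intro ennreal_mult[symmetric]) auto
    have b0: "0 \<le> 8 * M * ln (R / r)" using M0 lnp by simp
    have c0: "0 \<le> c3 * 4 * pi * M * (if R < d then 1 else 0) * d / R"
    proof (cases "R < d")
      case True then show ?thesis using c3n M0 Rp by (intro divide_nonneg_nonneg mult_nonneg_nonneg) auto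
    qed simp
    have "ennreal (8 * M * ln (R / r) + c3 * 4 * pi * M * (if R < d then 1 else 0) * d / R) * ennreal (norm v)
        = ennreal ((8 * M * ln (R / r) + c3 * 4 * pi * M * (if R < d then 1 else 0) * d / R) * norm v)"
      using b0 c0 by (intro ennreal_mult[symmetric]) auto
    also have "\<dots> = ennreal (8 * M * ln (R / r) * norm v) + ennreal (c3 * 4 * pi * M * (if R < d then 1 else 0) * d / R * norm v)"
      unfolding distrib_right by (rule ennreal_plus[OF mult_nonneg_nonneg[OF b0 norm_ge_zero] mult_nonneg_nonneg[OF c0 norm_ge_zero]])
    finally show ?thesis using a by (simp add: add.assoc)
  qed
  finally show ?thesis by (simp add: v_def)
qed


lemma Y_bound:
  assumes c3: "c3 = 0 \<or> c3 = 1"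
  shows "(\<integral>\<^sup>+h. Yk M R d c3 h \<partial>lborel) \<le> ennreal ((1 - c3) * 8 * pi * M^2 * (if R < d then 1 else 0) / R)"
proof -
  have Rp: "0 < R" using rR by linarith
  have c3n: "0 \<le> 1 - c3" using c3 by auto
  have "(\<integral>\<^sup>+h. Yk M R d c3 h \<partial>lborel) = ennreal ((1 - c3) * 4 * M^2) * (\<integral>\<^sup>+(h::real^2). ennreal (psi4 R d (norm h)) \<partial>lborel)"
    unfolding Yk_def by (rule nn_cmult_real) (use c3n Rp in \<open>auto simp: K_nonneg\<close>)
  also have "\<dots> \<le> ennreal ((1 - c3) * 4 * M^2) * ennreal (2 * pi * (if R < d then 1 else 0) / R)"
    using E4[OF Rp, of d] by (intro mult_left_mono) (auto simp: psi4_def)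
  also have "\<dots> = ennreal ((1 - c3) * 4 * M^2 * (2 * pi * (if R < d then 1 else 0) / R))"
    using c3n Rp by (intro ennreal_mult[symmetric]) auto
  also have "(1 - c3) * 4 * M^2 * (2 * pi * (if R < d then 1 else 0) / R) = (1 - c3) * 8 * pi * M^2 * (if R < d then 1 else 0) / R"
    by simp
  finally show ?thesis .
qed

lemma core_total:
  assumes c3: "c3 = 0 \<or> c3 = 1"
  shows "(\<integral>\<^sup>+x. indicator U x * (\<integral>\<^sup>+y. indicator U y * ennreal ((fr U f x - fr U f y)^2 / (dist x y)^3) \<partial>lborel) \<partial>lborel)
     \<le> ennreal (pi * r) * (\<integral>\<^sup>+z. ennreal ((norm (Gr U g z))^2) \<partial>lborel)
       + ennreal (8 * M * ln (R / r) + c3 * 4 * pi * M * (if R < d then 1 else 0) * d / R) * (\<integral>\<^sup>+z. ennreal (norm (Gr U g z)) \<partial>lborel)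
       + emeasure lborel U * ennreal ((1 - c3) * 8 * pi * M^2 * (if R < d then 1 else 0) / R)"
proof -
  define C where "C = 8 * M * ln (R / r) + c3 * 4 * pi * M * (if R < d then 1 else 0) * d / R"
  have "(\<integral>\<^sup>+z. (\<integral>\<^sup>+h. Pk U g M r R d c3 z h \<partial>lborel) \<partial>lborel)
      \<le> (\<integral>\<^sup>+z. ennreal (pi * r) * ennreal ((norm (Gr U g z))^2) + ennreal C * ennreal (norm (Gr U g z)) \<partial>lborel)"
    unfolding C_def by (intro nn_integral_mono inner_bound[OF c3])
  also have "\<dots> = ennreal (pi * r) * (\<integral>\<^sup>+z. ennreal ((norm (Gr U g z))^2) \<partial>lborel) + ennreal C * (\<integral>\<^sup>+z. ennreal (norm (Gr U g z)) \<partial>lborel)"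
    by (simp add: nn_integral_add nn_integral_cmult)
  finally have A: "(\<integral>\<^sup>+z. (\<integral>\<^sup>+h. Pk U g M r R d c3 z h \<partial>lborel) \<partial>lborel)
      \<le> ennreal (pi * r) * (\<integral>\<^sup>+z. ennreal ((norm (Gr U g z))^2) \<partial>lborel) + ennreal C * (\<integral>\<^sup>+z. ennreal (norm (Gr U g z)) \<partial>lborel)" .
  have B: "emeasure lborel U * (\<integral>\<^sup>+h. Yk M R d c3 h \<partial>lborel) \<le> emeasure lborel U * ennreal ((1 - c3) * 8 * pi * M^2 * (if R < d then 1 else 0) / R)"
    by (intro mult_left_mono Y_bound[OF c3]) auto
  from order_trans[OF core_chain[OF c3] add_mono[OF A B]] show ?thesis unfolding C_def .
qed

end

lemma ennreal_integral_le_nn: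
  fixes \<phi> :: "'a \<Rightarrow> real"
  assumes "\<And>x. 0 \<le> \<phi> x"
  shows "ennreal (integral\<^sup>L M \<phi>) \<le> (\<integral>\<^sup>+x. ennreal (\<phi> x) \<partial>M)"
proof (cases "integrable M \<phi>")
  case True then show ?thesis using assms by (simp add: nn_integral_eq_integral)
next
  case False then show ?thesis by (simp add: not_integrable_integral_eq)
qed

lemma frontier_null: "convex (S::(real^2) set) \<Longrightarrow> frontier S \<in> null_sets lebesgue"
  using negligible_convex_frontier negligible_iff_null_sets by blast

lemma AE_front: "convex (S::(real^2) set) \<Longrightarrow> AE x in lebesgue. x \<notin> frontier S"
  by (rule AE_not_in[OF frontier_null])

lemma not_front: "x \<notin> frontier S \<Longrightarrow> (x \<in> S \<longleftrightarrow> x \<in> interior S)"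
  using closure_subset interior_subset by (auto simp: frontier_def)

lemma bridge:
  fixes \<Omega> :: "(real^2) set" and F G :: "real^2 \<Rightarrow> real"
  assumes cvx: "convex \<Omega>" and bdd: "bounded \<Omega>"
   and Gm: "G \<in> borel_measurable borel"
   and FG: "\<And>x. x \<in> interior \<Omega> \<Longrightarrow> F x = G x" and G0: "\<And>x. x \<notin> interior \<Omega> \<Longrightarrow> G x = 0"
   and Gnn: "\<And>x. 0 \<le> G x" and GB: "\<And>x. G x \<le> B"
  shows "ennreal (LINT x:\<Omega>|lebesgue. F x) = (\<integral>\<^sup>+x. ennreal (G x) \<partial>lborel)"
proof -
  have ae: "AE x in lebesgue. G x = indicator \<Omega> x *\<^sub>R F x"
    using AE_front[OF cvx]
  proof eventually_elim
    case (elim x)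
    show ?case
    proof (cases "x \<in> interior \<Omega>")
      case True then show ?thesis using FG interior_subset by (auto simp: indicator_def)
    next
      case False then show ?thesis using not_front[OF elim] G0 by (auto simp: indicator_def)
    qed
  qed
  have Gml: "G \<in> borel_measurable lebesgue"
    using Gm by (intro measurable_completion) simp
  have Fm: "(\<lambda>x. indicator \<Omega> x *\<^sub>R F x) \<in> borel_measurable lebesgue"
    by (rule borel_measurable_AE[OF Gml ae])
  have "(LINT x:\<Omega>|lebesgue. F x) = integral\<^sup>L lebesgue G"
    unfolding set_lebesgue_integral_def
    by (rule integral_cong_AE[OF Fm Gml]) (use ae in \<open>eventually_elim, simp\<close>)
  also have "\<dots> = integral\<^sup>L lborel G"
    by (rule integral_completion) (simp add: Gm)
  finally have eq: "(LINT x:\<Omega>|lebesgue. F x) = integral\<^sup>L lborel G" .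
  have fin: "emeasure lborel (interior \<Omega>) < \<infinity>"
    using bdd by (intro emeasure_bounded_finite bounded_interior)
  have "integrable lborel (\<lambda>x. B * indicator (interior \<Omega>) x)"
    using fin by (intro integrable_mult_right integrable_real_indicator) auto
  then have iG: "integrable lborel G"
  proof (rule Bochner_Integration.integrable_bound)
    show "G \<in> borel_measurable lborel" using Gm by simp
    show "AE x in lborel. norm (G x) \<le> norm (B * indicator (interior \<Omega>) x)"
    proof (intro AE_I2)
      fix x show "norm (G x) \<le> norm (B * indicator (interior \<Omega>) x)"
        using Gnn[of x] GB[of x] G0[of x] by (cases "x \<in> interior \<Omega>") auto
    qed
  qed
  show ?thesis unfolding eq
    by (rule nn_integral_eq_integral[symmetric]) (use iG Gnn in auto)
qed

lemma measure_interior: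
  fixes \<Omega> :: "(real^2) set"
  assumes cvx: "convex \<Omega>" and bdd: "bounded \<Omega>"
  shows "emeasure lborel (interior \<Omega>) = ennreal (measure lebesgue \<Omega>)"
proof -
  have fin: "emeasure lborel (interior \<Omega>) < \<infinity>"
    using bdd by (intro emeasure_bounded_finite bounded_interior)
  have "emeasure lborel (interior \<Omega>) = ennreal (measure lborel (interior \<Omega>))"
    using fin by (simp add: emeasure_eq_ennreal_measure)
  also have "measure lborel (interior \<Omega>) = measure lebesgue (interior \<Omega>)"
    by simp
  also have "emeasure lebesgue (interior \<Omega>) = emeasure lebesgue \<Omega>"
  proof (rule emeasure_eq_AE)
    show "AE x in lebesgue. (x \<in> interior \<Omega>) = (x \<in> \<Omega>)"
      using AE_front[OF cvx] by eventually_elim (simp add: not_front)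
    show "interior \<Omega> \<in> sets lebesgue" by simp
    show "\<Omega> \<in> sets lebesgue" using measurable_convex[OF cvx bdd] by auto
  qed
  then have "measure lebesgue (interior \<Omega>) = measure lebesgue \<Omega>"
    by (simp add: measure_def)
  finally show ?thesis .
qed


lemma lhs_bound:
  fixes \<Omega> :: "(real^2) set" and f :: "real^2 \<Rightarrow> real"
  assumes cvx: "convex \<Omega>"
  shows "ennreal (LINT x:\<Omega>|lebesgue. LINT y:\<Omega>|lebesgue. (f x - f y)^2 / (dist x y)^3)
    \<le> (\<integral>\<^sup>+x. indicator (interior \<Omega>) x * (\<integral>\<^sup>+y. indicator (interior \<Omega>) y
           * ennreal ((fr (interior \<Omega>) f x - fr (interior \<Omega>) f y)^2 / (dist x y)^3) \<partial>lborel) \<partial>lborel)"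
proof -
  define I where "I = interior \<Omega>"
  define F where "F x y = (f x - f y)^2 / (dist x y)^3" for x y
  define G where "G x = (LINT y:\<Omega>|lebesgue. F x y)" for x
  define W where "W x y = ennreal ((fr I f x - fr I f y)^2 / (dist x y)^3)" for x y
  have F0: "0 \<le> F x y" for x y unfolding F_def by simp
  have G0: "0 \<le> G x" for x
    unfolding G_def set_lebesgue_integral_def using F0
    by (intro Bochner_Integration.integral_nonneg) (simp add: indicator_def)
  have Gle: "ennreal (G x) \<le> (\<integral>\<^sup>+y. ennreal (indicator \<Omega> y *\<^sub>R F x y) \<partial>lebesgue)" for x
    unfolding G_def set_lebesgue_integral_def by (rule ennreal_integral_le_nn) (simp add: F0)
  have "ennreal (LINT x:\<Omega>|lebesgue. G x) \<le> (\<integral>\<^sup>+x. ennreal (indicator \<Omega> x *\<^sub>R G x) \<partial>lebesgue)"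
    unfolding set_lebesgue_integral_def by (rule ennreal_integral_le_nn) (simp add: G0)
  also have "\<dots> \<le> (\<integral>\<^sup>+x. indicator \<Omega> x * (\<integral>\<^sup>+y. ennreal (indicator \<Omega> y *\<^sub>R F x y) \<partial>lebesgue) \<partial>lebesgue)"
  proof (intro nn_integral_mono)
    fix x
    show "ennreal (indicator \<Omega> x *\<^sub>R G x) \<le> indicator \<Omega> x * (\<integral>\<^sup>+y. ennreal (indicator \<Omega> y *\<^sub>R F x y) \<partial>lebesgue)"
      using Gle[of x] by (cases "x \<in> \<Omega>") auto
  qed
  also have "\<dots> = (\<integral>\<^sup>+x. indicator I x * (\<integral>\<^sup>+y. indicator I y * W x y \<partial>lborel) \<partial>lebesgue)"
  proof (rule nn_integral_cong_AE)
    show "AE x in lebesgue. indicator \<Omega> x * (\<integral>\<^sup>+y. ennreal (indicator \<Omega> y *\<^sub>R F x y) \<partial>lebesgue)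
        = indicator I x * (\<integral>\<^sup>+y. indicator I y * W x y \<partial>lborel)"
      using AE_front[OF cvx]
    proof eventually_elim
      case (elim x)
      show ?case
      proof (cases "x \<in> I")
        case True
        have "(\<integral>\<^sup>+y. ennreal (indicator \<Omega> y *\<^sub>R F x y) \<partial>lebesgue) = (\<integral>\<^sup>+y. indicator I y * W x y \<partial>lebesgue)"
        proof (rule nn_integral_cong_AE)
          show "AE y in lebesgue. ennreal (indicator \<Omega> y *\<^sub>R F x y) = indicator I y * W x y"
            using AE_front[OF cvx]
          proof eventually_elim
            case (elim y)
            show ?case
            proof (cases "y \<in> I")
              case True
              then show ?thesis using \<open>x \<in> I\<close> interior_subset
                by (auto simp: I_def F_def W_def fr_def indicator_def)
            next
              case False
              then have "y \<notin> \<Omega>" using not_front[OF elim] by (simp add: I_def)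
              then show ?thesis using False by simp
            qed
          qed
        qed
        also have "\<dots> = (\<integral>\<^sup>+y. indicator I y * W x y \<partial>lborel)"
          by (rule nn_integral_completion)
        finally show ?thesis using True interior_subset by (auto simp: I_def indicator_def)
      next
        case False
        then have "x \<notin> \<Omega>" using not_front[OF elim] by (simp add: I_def)
        then show ?thesis using False by simp
      qed
    qed
  qed
  also have "\<dots> = (\<integral>\<^sup>+x. indicator I x * (\<integral>\<^sup>+y. indicator I y * W x y \<partial>lborel) \<partial>lborel)"
    by (rule nn_integral_completion)
  finally show ?thesis by (simp add: I_def W_def G_def F_def)
qed

theorem lemma3p1:
  fixes \<Omega> :: "(real^2) set" and f :: "real^2 \<Rightarrow> real" and r R :: real
  assumes "bounded \<Omega>" and "convex \<Omega>"
    and "smooth_on_closure f \<Omega>"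
    and "0 < r" and "r \<le> R"
  shows "(LINT x:\<Omega>|lebesgue. LINT y:\<Omega>|lebesgue. (f x - f y)^2 / (dist x y)^3)
     \<le> pi * r * (LINT x:\<Omega>|lebesgue. (norm (grad f x))^2)
       + 8 * ln (R / r) * sup_norm_on f \<Omega> * (LINT x:\<Omega>|lebesgue. norm (grad f x))
       + 4 * pi * (if R < diameter \<Omega> then 1 else 0) / R * sup_norm_on f \<Omega>
           * min (diameter \<Omega> * (LINT x:\<Omega>|lebesgue. norm (grad f x)))
                 (2 * measure lebesgue \<Omega> * sup_norm_on f \<Omega>)"
proof (cases "\<Omega> = {}")
  case True
  then show ?thesis using assms(4,5) by (simp add: set_lebesgue_integral_def)
next
  case False
  from assms(3) obtain D where D0: "\<forall>x\<in>closure \<Omega>. D [] x = f x"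
    and Dc: "\<forall>is. continuous_on (closure \<Omega>) (D is)"
    and Dd: "\<forall>is. \<forall>x\<in>interior \<Omega>. (D is has_derivative (\<lambda>h. \<Sum>i\<in>UNIV. h $ i * D (i # is) x)) (at x)"
    unfolding smooth_on_closure_def by blast
  define g where "g z = (\<chi> i. D [i] z)" for z
  define M where "M = sup_norm_on f \<Omega>"
  define \<delta> where "\<delta> = diameter \<Omega>"
  define LHS where "LHS = (LINT x:\<Omega>|lebesgue. LINT y:\<Omega>|lebesgue. (f x - f y)^2 / (dist x y)^3)"
  define a2 where "a2 = (LINT x:\<Omega>|lebesgue. (norm (grad f x))^2)"
  define a1 where "a1 = (LINT x:\<Omega>|lebesgue. norm (grad f x))"
  define ind where "ind = (if R < \<delta> then 1 else 0 :: real)"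
  have gcl: "continuous_on (closure \<Omega>) g"
    unfolding g_def using Dc by (intro continuous_on_vec_lambda) blast
  have fcl: "continuous_on (closure \<Omega>) f"
    using Dc D0 continuous_on_eq by metis
  have cpt: "compact (closure \<Omega>)" using assms(1) by (simp add: compact_closure)
  obtain Lg where Lg: "\<And>z. z \<in> closure \<Omega> \<Longrightarrow> norm (g z) \<le> Lg"
    using compact_imp_bounded[OF compact_continuous_image[OF gcl cpt]] by (auto simp: bounded_iff)
  obtain Bf where Bf: "\<And>z. z \<in> closure \<Omega> \<Longrightarrow> norm (f z) \<le> Bf"
    using compact_imp_bounded[OF compact_continuous_image[OF fcl cpt]] by (auto simp: bounded_iff)
  obtain x0 where x0: "x0 \<in> \<Omega>" using False by blast
  have Lg0: "0 \<le> Lg" using Lg[of x0] x0 closure_subset by (meson norm_ge_zero order_trans subsetD)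
  have bdd: "bdd_above ((\<lambda>x. \<bar>f x\<bar>) ` \<Omega>)"
    using Bf closure_subset by (intro bdd_aboveI2[where M=Bf]) auto
  have fM: "\<bar>f x\<bar> \<le> M" if "x \<in> \<Omega>" for x
    unfolding M_def sup_norm_on_def by (rule cSUP_upper[OF that bdd])
  have M0: "0 \<le> M" using fM[OF x0] by linarith
  have diam: "dist x y \<le> \<delta>" if "x \<in> \<Omega>" "y \<in> \<Omega>" for x y
    unfolding \<delta>_def by (rule diameter_bounded_bound[OF assms(1) that])
  have der: "(f has_derivative (\<lambda>k. g z \<bullet> k)) (at z)" if z: "z \<in> interior \<Omega>" for z
  proof -
    have "(D [] has_derivative (\<lambda>h. \<Sum>i\<in>UNIV. h $ i * D [i] z)) (at z)" using Dd z by blast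
    moreover have "(\<lambda>h. \<Sum>i\<in>UNIV. h $ i * D [i] z) = (\<lambda>k. g z \<bullet> k)"
      by (auto simp: g_def inner_vec_def mult.commute fun_eq_iff)
    ultimately have "(D [] has_derivative (\<lambda>k. g z \<bullet> k)) (at z)" by simp
    then show ?thesis
      by (rule has_derivative_transform_within_open[OF _ open_interior z])
         (use D0 interior_subset closure_subset in blast)
  qed
  interpret C: core \<Omega> "interior \<Omega>" f g M \<delta> r R
  proof
    show "open (interior \<Omega>)" by simp
    show "convex (interior \<Omega>)" using assms(2) by (rule convex_interior)
    show "interior \<Omega> \<subseteq> \<Omega>" by (rule interior_subset)
    show "\<And>z. z \<in> interior \<Omega> \<Longrightarrow> (f has_derivative (\<lambda>k. g z \<bullet> k)) (at z)" by (rule der)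
    show "continuous_on (interior \<Omega>) g"
      by (rule continuous_on_subset[OF gcl order_trans[OF interior_subset closure_subset]])
    show "\<And>x. x \<in> \<Omega> \<Longrightarrow> \<bar>f x\<bar> \<le> M" by (rule fM)
    show "0 \<le> M" by (rule M0)
    show "\<And>x y. x \<in> \<Omega> \<Longrightarrow> y \<in> \<Omega> \<Longrightarrow> dist x y \<le> \<delta>" by (rule diam)
    show "0 < r" "r \<le> R" using assms(4,5) by auto
  qed
  have gradeq: "grad f z = g z" if z: "z \<in> interior \<Omega>" for z
  proof -
    have "(\<lambda>k. g z \<bullet> k) = frechet_derivative f (at z)" by (rule frechet_derivative_at[OF der[OF z]])
    then show ?thesis unfolding grad_def by (auto simp: vec_eq_iff inner_axis dest: fun_cong[where x="axis _ 1"] sym)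
  qed
  have Gn: "norm (Gr (interior \<Omega>) g z) \<le> Lg" for z
    using Lg[of z] Lg0 interior_subset closure_subset by (auto simp: Gr_def)
  have A2: "ennreal a2 = (\<integral>\<^sup>+z. ennreal ((norm (Gr (interior \<Omega>) g z))^2) \<partial>lborel)"
    unfolding a2_def
  proof (rule bridge[OF assms(2,1), where B="Lg^2"])
    show "(\<lambda>z. (norm (Gr (interior \<Omega>) g z))^2) \<in> borel_measurable borel" by measurable
    show "(norm (grad f x))^2 = (norm (Gr (interior \<Omega>) g x))^2" if "x \<in> interior \<Omega>" for x
      using that by (simp add: gradeq Gr_def)
    show "(norm (Gr (interior \<Omega>) g x))^2 = 0" if "x \<notin> interior \<Omega>" for x
      using that by (simp add: Gr_def)
    show "0 \<le> (norm (Gr (interior \<Omega>) g x))^2" for x by simp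
    show "(norm (Gr (interior \<Omega>) g x))^2 \<le> Lg^2" for x using Gn[of x] by (intro power_mono) auto
  qed
  have A1: "ennreal a1 = (\<integral>\<^sup>+z. ennreal (norm (Gr (interior \<Omega>) g z)) \<partial>lborel)"
    unfolding a1_def
  proof (rule bridge[OF assms(2,1), where B="Lg"])
    show "(\<lambda>z. norm (Gr (interior \<Omega>) g z)) \<in> borel_measurable borel" by measurable
    show "norm (grad f x) = norm (Gr (interior \<Omega>) g x)" if "x \<in> interior \<Omega>" for x
      using that by (simp add: gradeq Gr_def)
    show "norm (Gr (interior \<Omega>) g x) = 0" if "x \<notin> interior \<Omega>" for x
      using that by (simp add: Gr_def)
    show "0 \<le> norm (Gr (interior \<Omega>) g x)" for x by simp
    show "norm (Gr (interior \<Omega>) g x) \<le> Lg" for x by (rule Gn)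
  qed
  have a2nn: "0 \<le> a2" unfolding a2_def set_lebesgue_integral_def
    by (intro Bochner_Integration.integral_nonneg) (simp add: indicator_def)
  have a1nn: "0 \<le> a1" unfolding a1_def set_lebesgue_integral_def
    by (intro Bochner_Integration.integral_nonneg) (simp add: indicator_def)
  have mU: "emeasure lborel (interior \<Omega>) = ennreal (measure lebesgue \<Omega>)"
    by (rule measure_interior[OF assms(2,1)])
  have Rp: "0 < R" using assms(4,5) by linarith
  have lnp: "0 \<le> ln (R / r)" using assms(4,5) by simp
  have ind0: "0 \<le> ind" "ind \<le> 1" by (auto simp: ind_def)
  have key: "LHS \<le> pi * r * a2 + (8 * M * ln (R / r) + c3 * 4 * pi * M * ind * \<delta> / R) * a1
                 + measure lebesgue \<Omega> * ((1 - c3) * 8 * pi * M^2 * ind / R)"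
    if c3: "c3 = 0 \<or> c3 = 1" for c3
  proof -
    define C where "C = 8 * M * ln (R / r) + c3 * 4 * pi * M * ind * \<delta> / R"
    define Y where "Y = (1 - c3) * 8 * pi * M^2 * ind / R"
    have \<delta>0: "0 \<le> \<delta>" using diam[OF x0 x0] by simp
    have C0: "0 \<le> C" unfolding C_def using c3 M0 lnp ind0 Rp \<delta>0
      by (intro add_nonneg_nonneg divide_nonneg_nonneg mult_nonneg_nonneg) auto
    have Y0: "0 \<le> Y" unfolding Y_def using c3 ind0 Rp
      by (intro divide_nonneg_nonneg mult_nonneg_nonneg) auto
    have Z: "ennreal LHS \<le> ennreal (pi * r) * ennreal a2 + ennreal C * ennreal a1 + ennreal (measure lebesgue \<Omega>) * ennreal Y"
      using order_trans[OF lhs_bound[OF assms(2), of f] C.core_total[OF c3, unfolded A2[symmetric] A1[symmetric] mU]]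
      unfolding LHS_def C_def Y_def ind_def .
    have e1: "ennreal (pi * r) * ennreal a2 = ennreal (pi * r * a2)"
      by (rule ennreal_mult[symmetric]) (use assms(4) a2nn in auto)
    have e2: "ennreal C * ennreal a1 = ennreal (C * a1)"
      by (rule ennreal_mult[symmetric]) (use C0 a1nn in auto)
    have e3: "ennreal (measure lebesgue \<Omega>) * ennreal Y = ennreal (measure lebesgue \<Omega> * Y)"
      by (rule ennreal_mult[symmetric]) (use Y0 in auto)
    have p1: "0 \<le> pi * r * a2" using assms(4) a2nn by simp
    have p2: "0 \<le> C * a1" using C0 a1nn by simp
    have p3: "0 \<le> measure lebesgue \<Omega> * Y" using Y0 by simp
    have "ennreal LHS \<le> ennreal (pi * r * a2 + C * a1 + measure lebesgue \<Omega> * Y)"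
      using Z unfolding e1 e2 e3 ennreal_plus[OF add_nonneg_nonneg[OF p1 p2] p3] ennreal_plus[OF p1 p2] .
    then have "LHS \<le> pi * r * a2 + C * a1 + measure lebesgue \<Omega> * Y"
      by (subst (asm) ennreal_le_iff) (use p1 p2 p3 in auto)
    then show ?thesis unfolding C_def Y_def .
  qed
  have k1: "LHS \<le> pi * r * a2 + 8 * ln (R / r) * M * a1 + (4 * pi * M * ind * \<delta> / R) * a1"
    using key[of 1] by (simp add: algebra_simps)
  have k0: "LHS \<le> pi * r * a2 + 8 * ln (R / r) * M * a1 + measure lebesgue \<Omega> * (8 * pi * M^2 * ind / R)"
    using key[of 0] by (simp add: algebra_simps)
  have fin: "LHS \<le> pi * r * a2 + 8 * ln (R / r) * M * a1 + 4 * pi * ind / R * M * min (\<delta> * a1) (2 * measure lebesgue \<Omega> * M)"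
  proof (cases "\<delta> * a1 \<le> 2 * measure lebesgue \<Omega> * M")
    case True
    have mn: "min (\<delta> * a1) (2 * measure lebesgue \<Omega> * M) = \<delta> * a1" using True by (simp add: min_def)
    have eq: "4 * pi * ind / R * M * min (\<delta> * a1) (2 * measure lebesgue \<Omega> * M) = (4 * pi * M * ind * \<delta> / R) * a1"
      unfolding mn by (simp add: field_simps)
    show ?thesis unfolding eq using k1 .
  next
    case False
    have mn: "min (\<delta> * a1) (2 * measure lebesgue \<Omega> * M) = 2 * measure lebesgue \<Omega> * M" using False by (simp add: min_def)
    have eq: "4 * pi * ind / R * M * min (\<delta> * a1) (2 * measure lebesgue \<Omega> * M) = measure lebesgue \<Omega> * (8 * pi * M^2 * ind / R)"
      unfolding mn by (simp add: field_simps power2_eq_square)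
    show ?thesis unfolding eq using k0 .
  qed
  then show ?thesis unfolding LHS_def a2_def a1_def M_def ind_def \<delta>_def .
qed

end
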